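(* Let $d\ge1$ and let $\mathcal{F}\subseteq\binom{\mathbb{N}}{d}$ be a finite family. Then $\mathrm{Inc}(\mathcal{C}(\mathcal{F}))\subseteq\mathcal{C}(\mathrm{Inc}(\mathcal{F}))$.
   Context: $\mathbb{N}=\{1,2,3,\dots\}$. For $d\ge1$, $\binom{\mathbb{N}}{d}$ is the set of $d$-element subsets of $\mathbb{N}$; an element is written $\mathbf{u}=(u_1,\ldots,u_d)$ with $u_1<\cdots<u_d$. The squashed order on $\binom{\mathbb{N}}{d}$: $\mathbf{u}<\mathbf{v}$ iff the largest element of the symmetric difference $(\mathbf{u}\setminus\mathbf{v})\cup(\mathbf{v}\setminus\mathbf{u})$ belongs to $\mathbf{v}$. For a finite family $\mathcal{F}\subseteq\binom{\mathbb{N}}{d}$, its compression $\mathcal{C}(\mathcal{F})$ is the set of the $|\mathcal{F}|$ smallest elements of $\binom{\mathbb{N}}{d}$ in the squashed order. Let $\mathrm{Inc}_1$ be the set of maps $\pi\colon\mathbb{N}\to\mathbb{N}$ with $\pi(j)<\pi(j+1)$ and $\pi(j)\le j+1$ for all $j\ge1$, acting by $\pi(\mathbf{u})=(\pi(u_1),\ldots,\pi(u_d))$. For $\mathcal{F}\subseteq\binom{\mathbb{N}}{d}$, $\mathrm{Inc}(\mathcal{F})=\{\pi(\mathbf{u})\mid \mathbf{u}\in\mathcal{F},\ \pi\in\mathrm{Inc}_1\}$ (finite when $\mathcal{F}$ is finite). *)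

theory Defs
  imports Main
begin

definition binomN :: "nat \<Rightarrow> nat set set" where
  "binomN d = {u. u \<subseteq> {1..} \<and> finite u \<and> card u = d}"

definition sq_less :: "nat set \<Rightarrow> nat set \<Rightarrow> bool" where
  "sq_less u v \<longleftrightarrow> u \<noteq> v \<and> Max ((u - v) \<union> (v - u)) \<in> v"

definition compression :: "nat \<Rightarrow> nat set set \<Rightarrow> nat set set" where
  "compression d F = {u \<in> binomN d. card {w \<in> binomN d. sq_less w u} < card F}"

text \<open>Inc_1: maps pi : N -> N with pi j < pi (j+1) and pi j \<le> j+1 for all j \<ge> 1
  (values at 0 are irrelevant).\<close>
definition Inc1 :: "(nat \<Rightarrow> nat) set" where
  "Inc1 = {\<pi>. (\<forall>j\<ge>1. \<pi> j \<ge> 1 \<and> \<pi> j < \<pi> (Suc j) \<and> \<pi> j \<le> j + 1)}"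

definition Inc :: "nat set set \<Rightarrow> nat set set" where
  "Inc F = {\<pi> ` u | u \<pi>. u \<in> F \<and> \<pi> \<in> Inc1}"

end

theory Submission
  imports Defs
begin

lemma sq_less_iff:
  assumes "finite u" "finite v"
  shows "sq_less u v \<longleftrightarrow> (\<exists>a. a \<in> v \<and> a \<notin> u \<and> (\<forall>x>a. x \<in> u \<longleftrightarrow> x \<in> v))"
proof
  assume h: "sq_less u v"
  let ?D = "(u - v) \<union> (v - u)"
  have ne: "?D \<noteq> {}" using h unfolding sq_less_def by blast
  have fD: "finite ?D" using assms by auto
  define a where "a = Max ?D"
  have "a \<in> v" using h unfolding sq_less_def a_def by blast
  moreover have "a \<in> ?D" using Max_in[OF fD ne] a_def by simp
  ultimately have "a \<notin> u" by blast
  moreover have "\<forall>x>a. x \<in> u \<longleftrightarrow> x \<in> v"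
  proof (intro allI impI)
    fix x assume "x > a"
    then have "x \<notin> ?D" using Max_ge[OF fD] a_def by fastforce
    then show "x \<in> u \<longleftrightarrow> x \<in> v" by blast
  qed
  ultimately show "\<exists>a. a \<in> v \<and> a \<notin> u \<and> (\<forall>x>a. x \<in> u \<longleftrightarrow> x \<in> v)" using \<open>a \<in> v\<close> by blast
next
  assume "\<exists>a. a \<in> v \<and> a \<notin> u \<and> (\<forall>x>a. x \<in> u \<longleftrightarrow> x \<in> v)"
  then obtain a where a: "a \<in> v" "a \<notin> u" "\<forall>x>a. x \<in> u \<longleftrightarrow> x \<in> v" by blast
  let ?D = "(u - v) \<union> (v - u)"
  have fD: "finite ?D" using assms by auto
  have aD: "a \<in> ?D" using a by blast
  have "Max ?D = a"
  proof (rule Max_eqI[OF fD])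
    fix y assume "y \<in> ?D"
    then show "y \<le> a" using a(3) by (meson UnE Diff_iff not_le)
  qed (use aD in auto)
  then show "sq_less u v" unfolding sq_less_def using a by auto
qed

lemma sq_less_irrefl: "\<not> sq_less u u"
  unfolding sq_less_def by simp

lemma sq_less_trans:
  assumes "finite u" "finite v" "finite w" "sq_less u v" "sq_less v w"
  shows "sq_less u w"
proof -
  obtain a where a: "a \<in> v" "a \<notin> u" "\<forall>x>a. x \<in> u \<longleftrightarrow> x \<in> v"
    using assms(1,2,4) sq_less_iff by blast
  obtain b where b: "b \<in> w" "b \<notin> v" "\<forall>x>b. x \<in> v \<longleftrightarrow> x \<in> w"
    using assms(2,3,5) sq_less_iff by blast
  have "a \<noteq> b" using a b by blast
  show ?thesis
  proof (cases "a < b")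
    case True
    then have "b \<notin> u" using a(3) b(2) by blast
    then show ?thesis using sq_less_iff[OF assms(1,3)] b a True
      by (metis order.strict_trans)
  next
    case False
    then have "b < a" using \<open>a \<noteq> b\<close> by simp
    then have "a \<in> w" using b(3) a(1) by blast
    then show ?thesis using sq_less_iff[OF assms(1,3)] a b \<open>b < a\<close>
      by (metis order.strict_trans)
  qed
qed

lemma sq_less_asym:
  assumes "finite u" "finite v" "sq_less u v"
  shows "\<not> sq_less v u"
  using assms sq_less_trans sq_less_irrefl by blast

lemma sq_less_total:
  assumes "finite u" "finite v" "u \<noteq> v"
  shows "sq_less u v \<or> sq_less v u"
proof -
  let ?D = "(u - v) \<union> (v - u)"
  have "?D \<noteq> {}" using assms(3) by blast
  moreover have "finite ?D" using assms by auto
  ultimately have "Max ?D \<in> ?D" by (rule Max_in[rotated])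
  moreover have "(v - u) \<union> (u - v) = ?D" by blast
  ultimately show ?thesis unfolding sq_less_def using assms(3) by auto
qed

lemma sq_less_image:
  assumes "strict_mono g" "finite u" "finite v"
  shows "sq_less (g ` u) (g ` v) \<longleftrightarrow> sq_less u v"
proof -
  have inj: "inj g" using assms(1) strict_mono_imp_inj_on by blast
  have fu: "finite (g ` u)" "finite (g ` v)" using assms by auto
  show ?thesis
  proof
    assume "sq_less (g ` u) (g ` v)"
    then obtain a where a: "a \<in> g ` v" "a \<notin> g ` u" "\<forall>x>a. x \<in> g ` u \<longleftrightarrow> x \<in> g ` v"
      using sq_less_iff[OF fu] by blast
    obtain a' where a': "a' \<in> v" "a = g a'" using a(1) by blast
    have "a' \<notin> u" using a(2) a' by blast
    moreover have "\<forall>x>a'. x \<in> u \<longleftrightarrow> x \<in> v"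
    proof (intro allI impI)
      fix x assume "x > a'"
      then have "g x > a" using assms(1) a' by (simp add: strict_mono_less)
      then have "g x \<in> g ` u \<longleftrightarrow> g x \<in> g ` v" using a(3) by blast
      then show "x \<in> u \<longleftrightarrow> x \<in> v" using inj by (simp add: inj_image_mem_iff)
    qed
    ultimately show "sq_less u v" using sq_less_iff[OF assms(2,3)] a' by blast
  next
    assume "sq_less u v"
    then obtain a where a: "a \<in> v" "a \<notin> u" "\<forall>x>a. x \<in> u \<longleftrightarrow> x \<in> v"
      using sq_less_iff[OF assms(2,3)] by blast
    have "g a \<in> g ` v" using a by blast
    moreover have "g a \<notin> g ` u" using a(2) inj by (simp add: inj_image_mem_iff)
    moreover have "\<forall>y>g a. y \<in> g ` u \<longleftrightarrow> y \<in> g ` v"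
    proof (intro allI impI)
      fix y assume y: "y > g a"
      show "y \<in> g ` u \<longleftrightarrow> y \<in> g ` v"
      proof
        assume "y \<in> g ` u"
        then obtain x where x: "x \<in> u" "y = g x" by blast
        then have "x > a" using y assms(1) by (metis not_less_iff_gr_or_eq strict_mono_less)
        then show "y \<in> g ` v" using a(3) x by blast
      next
        assume "y \<in> g ` v"
        then obtain x where x: "x \<in> v" "y = g x" by blast
        then have "x > a" using y assms(1) by (metis not_less_iff_gr_or_eq strict_mono_less)
        then show "y \<in> g ` u" using a(3) x by blast
      qed
    qed
    ultimately show "sq_less (g ` u) (g ` v)" using sq_less_iff[OF fu] by blast
  qed
qed

lemma sq_less_insert:
  assumes "finite u" "finite v" "c \<notin> u" "c \<notin> v"
  shows "sq_less (insert c u) (insert c v) \<longleftrightarrow> sq_less u v"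
proof -
  have "(insert c u - insert c v) \<union> (insert c v - insert c u) = (u - v) \<union> (v - u)"
    using assms by blast
  moreover have "insert c u = insert c v \<longleftrightarrow> u = v" using assms by (metis Diff_insert_absorb)
  moreover have "Max ((u - v) \<union> (v - u)) \<in> insert c v \<longleftrightarrow> Max ((u - v) \<union> (v - u)) \<in> v"
    if "u \<noteq> v"
  proof -
    have "(u - v) \<union> (v - u) \<noteq> {}" using that by blast
    then have "Max ((u - v) \<union> (v - u)) \<in> (u - v) \<union> (v - u)"
      using assms by (intro Max_in) auto
    then show ?thesis using assms by blast
  qed
  ultimately show ?thesis unfolding sq_less_def by auto
qed

lemma sq_less_bound:
  assumes "finite u" "finite v" "sq_less w v" "finite w" "x \<in> w"
  shows "\<exists>y\<in>v. x \<le> y"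
proof (rule ccontr)
  assume "\<not> (\<exists>y\<in>v. x \<le> y)"
  then have nv: "\<forall>y\<in>v. y < x" by auto
  obtain a where a: "a \<in> v" "a \<notin> w" "\<forall>z>a. z \<in> w \<longleftrightarrow> z \<in> v"
    using assms(3) sq_less_iff[OF assms(4,2)] by blast
  have "a < x" using nv a(1) by blast
  then have "x \<in> v" using a(3) assms(5) by blast
  then show False using nv by blast
qed


definition rk :: "nat \<Rightarrow> nat set \<Rightarrow> nat" where
  "rk d u = card {w \<in> binomN d. sq_less w u}"

definition Cs :: "nat \<Rightarrow> nat \<Rightarrow> nat set set" where
  "Cs d m = {u \<in> binomN d. rk d u < m}"

lemma compression_eq: "compression d F = Cs d (card F)"
  by (simp add: compression_def Cs_def rk_def)

lemma binomN_D:
  assumes "u \<in> binomN d"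
  shows "finite u" "card u = d" "u \<subseteq> {1..}" "0 \<notin> u"
  using assms unfolding binomN_def by auto

lemma binomN_I: "finite u \<Longrightarrow> card u = d \<Longrightarrow> 0 \<notin> u \<Longrightarrow> u \<in> binomN d"
  unfolding binomN_def by (auto simp: Suc_le_eq) (metis gr0I)

lemma below_subset:
  assumes "finite v" "finite w" "sq_less w v"
  shows "w \<subseteq> {..Max v}"
proof
  fix x assume "x \<in> w"
  then obtain y where y: "y \<in> v" "x \<le> y" using sq_less_bound[OF assms(1) assms(1) assms(3) assms(2)] by blast
  have "y \<le> Max v" using Max_ge[OF assms(1) y(1)] .
  then show "x \<in> {..Max v}" using y(2) by simp
qed

lemma below_finite:
  assumes "finite v"
  shows "finite {w \<in> binomN d. sq_less w v}"
proof -
  have "{w \<in> binomN d. sq_less w v} \<subseteq> Pow {..Max v}"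
    using below_subset[OF assms] binomN_D(1) by blast
  then show ?thesis by (rule finite_subset) simp
qed

lemma rk_less:
  assumes "u \<in> binomN d" "v \<in> binomN d" "sq_less u v"
  shows "rk d u < rk d v"
proof -
  have fin: "finite {w \<in> binomN d. sq_less w v}" using below_finite binomN_D(1)[OF assms(2)] by blast
  have "{w \<in> binomN d. sq_less w u} \<subset> {w \<in> binomN d. sq_less w v}"
  proof
    show "{w \<in> binomN d. sq_less w u} \<subseteq> {w \<in> binomN d. sq_less w v}"
    proof (rule subsetI)
      fix w assume "w \<in> {w \<in> binomN d. sq_less w u}"
      then have w: "w \<in> binomN d" "sq_less w u" by auto
      have "sq_less w v"
        using sq_less_trans[OF binomN_D(1)[OF w(1)] binomN_D(1)[OF assms(1)] binomN_D(1)[OF assms(2)] w(2) assms(3)] .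
      then show "w \<in> {w \<in> binomN d. sq_less w v}" using w(1) by simp
    qed
    show "{w \<in> binomN d. sq_less w u} \<noteq> {w \<in> binomN d. sq_less w v}"
      using assms sq_less_irrefl by blast
  qed
  then show ?thesis unfolding rk_def using fin psubset_card_mono by blast
qed

lemma rk_less_iff:
  assumes "u \<in> binomN d" "v \<in> binomN d"
  shows "sq_less u v \<longleftrightarrow> rk d u < rk d v"
proof
  assume "sq_less u v" then show "rk d u < rk d v" using rk_less assms by blast
next
  assume h: "rk d u < rk d v"
  show "sq_less u v"
  proof (rule ccontr)
    assume "\<not> sq_less u v"
    moreover have "u \<noteq> v" using h by auto
    moreover have "sq_less u v \<or> sq_less v u"
      using sq_less_total[OF binomN_D(1)[OF assms(1)] binomN_D(1)[OF assms(2)] \<open>u \<noteq> v\<close>] .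
    ultimately have "sq_less v u" by blast
    then show False using rk_less[OF assms(2,1)] h by simp
  qed
qed

lemma rk_inj:
  assumes "u \<in> binomN d" "v \<in> binomN d" "rk d u = rk d v"
  shows "u = v"
  using rk_less_iff[OF assms(1,2)] rk_less_iff[OF assms(2,1)] assms(3)
    sq_less_total[OF binomN_D(1)[OF assms(1)] binomN_D(1)[OF assms(2)]] by auto

lemma inj_on_rk: "inj_on (rk d) (binomN d)"
  using rk_inj by (meson inj_onI)

lemma rk_down:
  assumes "u \<in> binomN d" "m < rk d u"
  shows "\<exists>w\<in>binomN d. rk d w = m"
proof -
  let ?D = "{w \<in> binomN d. sq_less w u}"
  have fin: "finite ?D" using below_finite binomN_D(1)[OF assms(1)] by blast
  have sub: "rk d ` ?D \<subseteq> {..<rk d u}"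
  proof
    fix x assume "x \<in> rk d ` ?D"
    then obtain w where w: "w \<in> binomN d" "sq_less w u" "x = rk d w" by blast
    have "rk d w < rk d u" using rk_less[OF w(1) assms(1) w(2)] .
    then show "x \<in> {..<rk d u}" using w(3) by simp
  qed
  have "card (rk d ` ?D) = card ?D"
  proof (rule card_image)
    show "inj_on (rk d) ?D" by (rule inj_on_subset[OF inj_on_rk]) auto
  qed
  also have "\<dots> = rk d u" unfolding rk_def ..
  finally have "rk d ` ?D = {..<rk d u}"
    using sub by (intro card_subset_eq) auto
  then have "m \<in> rk d ` ?D" using assms(2) by simp
  then obtain w where "w \<in> ?D" "rk d w = m" by blast
  then show ?thesis by blast
qed

lemma binomN_infinite:
  assumes "d \<ge> 1"
  shows "infinite (binomN d)"
proof -
  have "(\<lambda>t. {Suc t..<Suc t + d}) ` UNIV \<subseteq> binomN d"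
    by (auto intro!: binomN_I)
  moreover have "inj (\<lambda>t::nat. {Suc t..<Suc t + d})"
  proof (rule injI)
    fix x y :: nat assume "{Suc x..<Suc x + d} = {Suc y..<Suc y + d}"
    moreover have "Suc x \<in> {Suc x..<Suc x + d}" "Suc y \<in> {Suc y..<Suc y + d}" using assms by auto
    ultimately have "Suc x \<ge> Suc y" "Suc y \<ge> Suc x" by auto
    then show "x = y" by simp
  qed
  ultimately show ?thesis by (meson finite_imageD finite_subset infinite_UNIV_nat)
qed

lemma rk_surj:
  assumes "d \<ge> 1"
  shows "\<exists>u\<in>binomN d. rk d u = m"
proof -
  have "infinite (rk d ` binomN d)"
    using binomN_infinite[OF assms] inj_on_rk finite_image_iff by blast
  then obtain k where "k \<in> rk d ` binomN d" "k > m"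
  proof -
    have "\<not> (\<forall>n\<in>rk d ` binomN d. n < Suc m)"
      using \<open>infinite (rk d ` binomN d)\<close> finite_nat_set_iff_bounded by blast
    then show ?thesis using that by (meson not_less_eq)
  qed
  then show ?thesis using rk_down by blast
qed

lemma Cs_bij:
  assumes "d \<ge> 1"
  shows "bij_betw (rk d) (Cs d m) {..<m}"
  unfolding bij_betw_def
proof
  show "inj_on (rk d) (Cs d m)" using inj_on_rk unfolding Cs_def by (rule inj_on_subset) auto
  show "rk d ` Cs d m = {..<m}"
  proof
    show "rk d ` Cs d m \<subseteq> {..<m}" unfolding Cs_def by auto
    show "{..<m} \<subseteq> rk d ` Cs d m"
    proof
      fix i assume "i \<in> {..<m}"
      obtain u where "u \<in> binomN d" "rk d u = i" using rk_surj[OF assms] by blast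
      then have "u \<in> Cs d m" using \<open>i \<in> {..<m}\<close> unfolding Cs_def by simp
      then show "i \<in> rk d ` Cs d m" using \<open>rk d u = i\<close> by blast
    qed
  qed
qed

lemma card_Cs: "d \<ge> 1 \<Longrightarrow> card (Cs d m) = m"
proof -
  assume "d \<ge> 1"
  then have "card (Cs d m) = card {..<m}" using Cs_bij[of d m] by (intro bij_betw_same_card) simp
  then show ?thesis by simp
qed

lemma finite_Cs: "d \<ge> 1 \<Longrightarrow> finite (Cs d m)"
  using Cs_bij bij_betw_finite by blast

lemma Cs_sub: "Cs d m \<subseteq> binomN d"
  unfolding Cs_def by auto

lemma Cs_mono: "m \<le> m' \<Longrightarrow> Cs d m \<subseteq> Cs d m'"
  unfolding Cs_def by auto

lemma Cs_down:
  assumes "u \<in> Cs d m" "w \<in> binomN d" "sq_less w u"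
  shows "w \<in> Cs d m"
proof -
  have "rk d w < rk d u" using rk_less assms(2,3) assms(1) Cs_sub by blast
  then show ?thesis using assms unfolding Cs_def by simp
qed

lemma downclosed_eq:
  assumes "d \<ge> 1" "finite X" "X \<subseteq> binomN d"
    and down: "\<And>u w. u \<in> X \<Longrightarrow> w \<in> binomN d \<Longrightarrow> sq_less w u \<Longrightarrow> w \<in> X"
  shows "X = Cs d (card X)"
proof -
  have "X \<subseteq> Cs d (card X)"
  proof
    fix u assume u: "u \<in> X"
    have "{w \<in> binomN d. sq_less w u} \<subseteq> X - {u}" using down u sq_less_irrefl by blast
    then have "rk d u \<le> card (X - {u})" unfolding rk_def using assms(2) by (intro card_mono) auto
    also have "\<dots> < card X"
    proof -
      have "card X > 0" using u assms(2) card_gt_0_iff by blast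
      then show ?thesis using card_Diff_singleton[OF u] by simp
    qed
    finally show "u \<in> Cs d (card X)" unfolding Cs_def using u assms(3) by auto
  qed
  moreover have "card (Cs d (card X)) = card X" using card_Cs[OF assms(1)] .
  ultimately show ?thesis using finite_Cs[OF assms(1)] card_subset_eq by metis
qed

lemma binomN_0: "binomN 0 = {{}}"
  unfolding binomN_def by (auto simp: card_eq_0_iff)

lemma Cs_0: "Cs 0 m = (if m = 0 then {} else {{}})"
proof -
  have "rk 0 {} = 0" unfolding rk_def binomN_0 by (simp add: sq_less_irrefl)
  then show ?thesis unfolding Cs_def binomN_0 by auto
qed

lemma rk_lt_iff_Cs:
  assumes "u \<in> binomN d" "v \<in> binomN d"
  shows "{w \<in> binomN d. sq_less w v} = Cs d (rk d v)"
  unfolding Cs_def using rk_less_iff[OF _ assms(2)] by auto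


definition sh :: "nat set \<Rightarrow> nat set" where "sh u = Suc ` u"
definition unsh :: "nat set \<Rightarrow> nat set" where "unsh u = (\<lambda>x. x - 1) ` u"
definition ins1 :: "nat set \<Rightarrow> nat set" where "ins1 v = insert 1 (Suc ` v)"

definition P :: "nat \<Rightarrow> nat \<Rightarrow> nat" where "P d m = card {u \<in> Cs d m. 1 \<in> u}"
definition Q :: "nat \<Rightarrow> nat \<Rightarrow> nat" where "Q d m = m - P d m"

lemma sh_binomN: "w \<in> binomN d \<Longrightarrow> sh w \<in> binomN d"
  unfolding sh_def by (intro binomN_I) (auto simp: binomN_D card_image)

lemma one_notin_sh: "1 \<notin> sh w \<longleftrightarrow> 0 \<notin> w"
  unfolding sh_def by auto

lemma sh_inj: "sh u = sh v \<Longrightarrow> u = v"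
  unfolding sh_def by (simp add: inj_image_eq_iff)

lemma sh_less: "finite u \<Longrightarrow> finite v \<Longrightarrow> sq_less (sh u) (sh v) \<longleftrightarrow> sq_less u v"
  unfolding sh_def by (rule sq_less_image) (simp add: strict_mono_Suc_iff)

lemma unsh_sh: "unsh (sh u) = u"
  unfolding unsh_def sh_def by (simp add: image_image)

lemma sh_unsh: "0 \<notin> u \<Longrightarrow> sh (unsh u) = u"
  unfolding unsh_def sh_def image_image
proof -
  assume "0 \<notin> u"
  then have "\<forall>x\<in>u. Suc (x - 1) = x" by (metis Suc_pred' gr0I)
  then show "(\<lambda>x. Suc (x - 1)) ` u = u" by simp
qed

lemma unsh_binomN:
  assumes "u \<in> binomN d" "1 \<notin> u"
  shows "unsh u \<in> binomN d"
proof -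
  have u0: "0 \<notin> u" using binomN_D(4)[OF assms(1)] .
  have "inj_on (\<lambda>x. x - 1) u"
  proof (rule inj_onI)
    fix x y assume "x \<in> u" "y \<in> u" "x - 1 = y - 1"
    then show "x = y" using u0 by (metis Suc_pred' gr0I)
  qed
  moreover have "0 \<notin> unsh u"
  proof
    assume "0 \<in> unsh u"
    then obtain x where "x \<in> u" "x - 1 = 0" unfolding unsh_def by auto
    then have "x = 0 \<or> x = 1" by arith
    then show False using u0 assms(2) \<open>x \<in> u\<close> by blast
  qed
  ultimately show ?thesis unfolding unsh_def using binomN_D[OF assms(1)]
    by (intro binomN_I) (auto simp: card_image unsh_def)
qed

lemma ins1_eq: "ins1 v = insert 1 (sh v)"
  unfolding ins1_def sh_def ..

lemma ins1_binomN:
  assumes "v \<in> binomN (d - 1)" "d \<ge> 1"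
  shows "ins1 v \<in> binomN d"
proof -
  have "1 \<notin> sh v" using one_notin_sh binomN_D(4)[OF assms(1)] by blast
  moreover have "sh v \<in> binomN (d - 1)" using sh_binomN[OF assms(1)] .
  ultimately show ?thesis unfolding ins1_eq using assms(2)
    by (intro binomN_I) (auto simp: binomN_D)
qed

lemma one_in_ins1: "1 \<in> ins1 v"
  unfolding ins1_def by simp

lemma ins1_inj:
  assumes "0 \<notin> u" "0 \<notin> v" "ins1 u = ins1 v"
  shows "u = v"
proof -
  have "1 \<notin> sh u" "1 \<notin> sh v" using assms one_notin_sh by blast+
  then have "sh u = sh v" using assms(3) unfolding ins1_eq by (metis Diff_insert_absorb)
  then show ?thesis by (rule sh_inj)
qed

lemma ins1_less:
  assumes "finite u" "finite v" "0 \<notin> u" "0 \<notin> v"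
  shows "sq_less (ins1 u) (ins1 v) \<longleftrightarrow> sq_less u v"
proof -
  have "1 \<notin> sh u" "1 \<notin> sh v" using assms one_notin_sh by blast+
  then have "sq_less (ins1 u) (ins1 v) \<longleftrightarrow> sq_less (sh u) (sh v)"
    unfolding ins1_eq using assms by (intro sq_less_insert) (auto simp: sh_def)
  also have "\<dots> \<longleftrightarrow> sq_less u v" using sh_less assms by blast
  finally show ?thesis .
qed

lemma ins1_surj:
  assumes "u \<in> binomN d" "1 \<in> u"
  shows "unsh (u - {1}) \<in> binomN (d - 1)" "ins1 (unsh (u - {1})) = u"
proof -
  have "u - {1} \<in> binomN (d - 1)" using binomN_D[OF assms(1)] assms(2)
    by (intro binomN_I) auto
  then show "unsh (u - {1}) \<in> binomN (d - 1)" by (rule unsh_binomN) simp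
  have "sh (unsh (u - {1})) = u - {1}" using binomN_D(4)[OF assms(1)] by (intro sh_unsh) simp
  then show "ins1 (unsh (u - {1})) = u" unfolding ins1_eq using assms(2) by auto
qed

lemma P_le: "d \<ge> 1 \<Longrightarrow> P d m \<le> m"
proof -
  assume "d \<ge> 1"
  have "P d m \<le> card (Cs d m)" unfolding P_def using finite_Cs[OF \<open>d \<ge> 1\<close>] by (intro card_mono) auto
  then show ?thesis using card_Cs[OF \<open>d \<ge> 1\<close>] by simp
qed

lemma card_nonone: "d \<ge> 1 \<Longrightarrow> card {u \<in> Cs d m. 1 \<notin> u} = Q d m"
proof -
  assume d: "d \<ge> 1"
  have "Cs d m = {u \<in> Cs d m. 1 \<in> u} \<union> {u \<in> Cs d m. 1 \<notin> u}" by blast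
  moreover have "finite (Cs d m)" using finite_Cs[OF d] .
  ultimately have "card (Cs d m) = P d m + card {u \<in> Cs d m. 1 \<notin> u}"
    unfolding P_def by (metis (no_types, lifting) card_Un_disjoint disjoint_iff finite_Un mem_Collect_eq)
  then show ?thesis unfolding Q_def using card_Cs[OF d] by simp
qed

lemma M2:
  assumes d: "d \<ge> 1"
  shows "{u \<in> Cs d y. 1 \<notin> u} = sh ` Cs d (Q d y)"
proof -
  define X where "X = {w \<in> binomN d. sh w \<in> Cs d y}"
  have imX: "sh ` X = {u \<in> Cs d y. 1 \<notin> u}"
  proof
    show "sh ` X \<subseteq> {u \<in> Cs d y. 1 \<notin> u}"
      unfolding X_def using one_notin_sh binomN_D(4) by blast
    show "{u \<in> Cs d y. 1 \<notin> u} \<subseteq> sh ` X"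
    proof
      fix u assume u: "u \<in> {u \<in> Cs d y. 1 \<notin> u}"
      then have ub: "u \<in> binomN d" using Cs_sub by blast
      have "unsh u \<in> binomN d" using unsh_binomN[OF ub] u by blast
      moreover have "sh (unsh u) = u" using sh_unsh binomN_D(4)[OF ub] by blast
      ultimately show "u \<in> sh ` X" unfolding X_def using u by (metis (mono_tags, lifting) image_eqI mem_Collect_eq)
    qed
  qed
  have inj: "inj_on sh X" using sh_inj by (meson inj_onI)
  have finX: "finite X"
  proof -
    have "finite (sh ` X)" unfolding imX using finite_Cs[OF d] by simp
    then show ?thesis using inj finite_image_iff by blast
  qed
  have cardX: "card X = Q d y"
    using card_image[OF inj] imX card_nonone[OF d] by simp
  have "X = Cs d (card X)"
  proof (rule downclosed_eq[OF d finX])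
    show "X \<subseteq> binomN d" unfolding X_def by blast
    fix u w assume u: "u \<in> X" and w: "w \<in> binomN d" and wu: "sq_less w u"
    have ub: "u \<in> binomN d" using u X_def by blast
    have "sq_less (sh w) (sh u)" using sh_less binomN_D(1)[OF w] binomN_D(1)[OF ub] wu by blast
    then have "sh w \<in> Cs d y" using Cs_down[of "sh u" d y "sh w"] u sh_binomN[OF w] unfolding X_def by blast
    then show "w \<in> X" unfolding X_def using w by blast
  qed
  then show ?thesis using imX cardX by simp
qed

lemma M1:
  assumes d: "d \<ge> 2"
  shows "{u \<in> Cs d y. 1 \<in> u} = ins1 ` Cs (d - 1) (P d y)"
proof -
  have d1: "d - 1 \<ge> 1" "d \<ge> 1" using d by auto
  define X where "X = {w \<in> binomN (d - 1). ins1 w \<in> Cs d y}"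
  have imX: "ins1 ` X = {u \<in> Cs d y. 1 \<in> u}"
  proof
    show "ins1 ` X \<subseteq> {u \<in> Cs d y. 1 \<in> u}"
      unfolding X_def using one_in_ins1 by blast
    show "{u \<in> Cs d y. 1 \<in> u} \<subseteq> ins1 ` X"
    proof
      fix u assume u: "u \<in> {u \<in> Cs d y. 1 \<in> u}"
      then have ub: "u \<in> binomN d" using Cs_sub by blast
      have "unsh (u - {1}) \<in> binomN (d - 1)" "ins1 (unsh (u - {1})) = u"
        using ins1_surj[OF ub] u by auto
      then show "u \<in> ins1 ` X" unfolding X_def using u by (metis (mono_tags, lifting) image_eqI mem_Collect_eq)
    qed
  qed
  have inj: "inj_on ins1 X"
  proof (rule inj_onI)
    fix a b assume "a \<in> X" "b \<in> X" "ins1 a = ins1 b"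
    then show "a = b" using ins1_inj binomN_D(4) unfolding X_def by blast
  qed
  have finX: "finite X"
  proof -
    have "finite (ins1 ` X)" unfolding imX using finite_Cs[OF d1(2)] by simp
    then show ?thesis using inj finite_image_iff by blast
  qed
  have cardX: "card X = P d y"
    using card_image[OF inj] imX unfolding P_def by simp
  have "X = Cs (d - 1) (card X)"
  proof (rule downclosed_eq[OF d1(1) finX])
    show "X \<subseteq> binomN (d - 1)" unfolding X_def by blast
    fix u w assume u: "u \<in> X" and w: "w \<in> binomN (d - 1)" and wu: "sq_less w u"
    have ub: "u \<in> binomN (d - 1)" using u X_def by blast
    have "sq_less (ins1 w) (ins1 u)"
      using ins1_less binomN_D(1,4)[OF w] binomN_D(1,4)[OF ub] wu by blast
    then have "ins1 w \<in> Cs d y" using Cs_down[of "ins1 u" d y "ins1 w"] u ins1_binomN[OF w d1(2)]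
      unfolding X_def by blast
    then show "w \<in> X" unfolding X_def using w by blast
  qed
  then show ?thesis using imX cardX by simp
qed

lemma P_0: "P 0 m = 0"
  unfolding P_def Cs_0 by auto

lemma P_mono: "m \<le> m' \<Longrightarrow> P d m \<le> P d m'"
proof -
  assume "m \<le> m'"
  show ?thesis
  proof (cases "d = 0")
    case True
    then show ?thesis using P_0 by simp
  next
    case False
    then have "finite (Cs d m')" using finite_Cs by simp
    then show ?thesis unfolding P_def using Cs_mono[OF \<open>m \<le> m'\<close>]
      by (intro card_mono) auto
  qed
qed



definition Mn :: "nat \<Rightarrow> nat \<Rightarrow> nat" where "Mn k m = (\<Sum>u\<in>Cs k m. Min u)"

lemma Min_one:
  assumes "u \<in> binomN d" "1 \<in> u"
  shows "Min u = 1"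
proof -
  have "finite u" "0 \<notin> u" using binomN_D[OF assms(1)] by auto
  show ?thesis
  proof (rule Min_eqI)
    show "finite u" by fact
    show "1 \<in> u" by fact
    fix y assume "y \<in> u"
    then show "1 \<le> y" using \<open>0 \<notin> u\<close> by (cases y) auto
  qed
qed

lemma Min_sh:
  assumes "finite w" "w \<noteq> {}"
  shows "Min (sh w) = Suc (Min w)"
  unfolding sh_def using mono_Min_commute[of Suc w] assms by (simp add: mono_Suc)

lemma binomN_ne: "u \<in> binomN d \<Longrightarrow> d \<ge> 1 \<Longrightarrow> u \<noteq> {}"
  using binomN_D(2) by fastforce

lemma Mn_rec:
  assumes k: "k \<ge> 1"
  shows "Mn k y = y + Mn k (Q k y)"
proof -
  let ?A = "{u \<in> Cs k y. 1 \<in> u}" and ?B = "{u \<in> Cs k y. 1 \<notin> u}"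
  have fin: "finite (Cs k y)" using finite_Cs[OF k] .
  have split: "Cs k y = ?A \<union> ?B" by blast
  have "Mn k y = sum Min ?A + sum Min ?B"
    unfolding Mn_def using fin by (subst split, intro sum.union_disjoint) auto
  moreover have "sum Min ?A = P k y"
  proof -
    have "sum Min ?A = sum (\<lambda>u. 1) ?A"
      using Min_one Cs_sub by (intro sum.cong) blast+
    then show ?thesis unfolding P_def by simp
  qed
  moreover have "sum Min ?B = Q k y + Mn k (Q k y)"
  proof -
    have inj: "inj_on sh (Cs k (Q k y))" using sh_inj by (meson inj_onI)
    have "sum Min ?B = sum (Min \<circ> sh) (Cs k (Q k y))"
      unfolding M2[OF k] using sum.reindex[OF inj] by simp
    also have "\<dots> = sum (\<lambda>w. Suc (Min w)) (Cs k (Q k y))"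
    proof (rule sum.cong)
      fix w assume "w \<in> Cs k (Q k y)"
      then have "w \<in> binomN k" using Cs_sub by blast
      then show "(Min \<circ> sh) w = Suc (Min w)"
        using Min_sh binomN_D(1) binomN_ne k by simp
    qed simp
    also have "\<dots> = card (Cs k (Q k y)) + Mn k (Q k y)"
      unfolding Mn_def by (simp add: sum_Suc)
    finally show ?thesis using card_Cs[OF k] by simp
  qed
  ultimately show ?thesis unfolding Q_def using P_le[OF k, of y] by simp
qed

lemma Mn_mono:
  assumes "k \<ge> 1" "m \<le> m'"
  shows "Mn k m \<le> Mn k m'"
  unfolding Mn_def using Cs_mono[OF assms(2)] finite_Cs[OF assms(1)]
  by (intro sum_mono2) auto

lemma Mn_0: "Mn k 0 = 0"
  unfolding Mn_def Cs_def by simp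

lemma P_one:
  assumes k: "k \<ge> 1"
  shows "P k 1 = 1"
proof (rule ccontr)
  assume h: "P k 1 \<noteq> 1"
  have "P k 1 \<le> 1" using P_le[OF k] by simp
  then have P0: "P k 1 = 0" using h by simp
  then have Q1: "Q k 1 = 1" unfolding Q_def by simp
  have "card (Cs k 1) = 1" using card_Cs[OF k] .
  then obtain u0 where u0: "Cs k 1 = {u0}" using card_1_singletonE by blast
  have "{u \<in> Cs k 1. 1 \<in> u} = {}"
    using P0 finite_Cs[OF k] unfolding P_def by simp
  then have "{u \<in> Cs k 1. 1 \<notin> u} = Cs k 1" by blast
  then have "Cs k 1 = {u \<in> Cs k 1. 1 \<notin> u}" by (rule sym)
  also have "\<dots> = sh ` Cs k (Q k 1)" by (rule M2[OF k])
  also have "\<dots> = sh ` Cs k 1" by (simp only: Q1)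
  finally have "Cs k 1 = sh ` Cs k 1" .
  then have "{u0} = sh ` {u0}" unfolding u0 .
  then have "sh u0 = u0" by simp
  moreover have "u0 \<in> binomN k" using u0 Cs_sub by blast
  ultimately have f: "finite u0" and ne: "u0 \<noteq> {}" and e: "Suc ` u0 = u0"
    using binomN_D(1) binomN_ne k unfolding sh_def by auto
  have "Max u0 \<in> u0" using Max_in[OF f ne] .
  then have "Suc (Max u0) \<in> Suc ` u0" by (rule imageI)
  then have "Suc (Max u0) \<in> u0" using e by simp
  then have "Suc (Max u0) \<le> Max u0" using Max_ge[OF f] by blast
  then show False by simp
qed

lemma P_pos: "k \<ge> 1 \<Longrightarrow> m \<ge> 1 \<Longrightarrow> P k m \<ge> 1"
  using P_one P_mono by metis

lemma P1_le: "P 1 m \<le> 1"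
proof -
  have "{u \<in> Cs 1 m. 1 \<in> u} \<subseteq> {{1}}"
  proof
    fix u assume "u \<in> {u \<in> Cs 1 m. 1 \<in> u}"
    then have "u \<in> binomN 1" "1 \<in> u" using Cs_sub by auto
    then obtain a where "u = {a}" using binomN_D(2) card_1_singletonE by metis
    then show "u \<in> {{1}}" using \<open>1 \<in> u\<close> by simp
  qed
  then have "card {u \<in> Cs 1 m. 1 \<in> u} \<le> card {{1::nat}}" by (intro card_mono) auto
  then show ?thesis unfolding P_def by simp
qed

definition ONES :: "nat \<Rightarrow> bool" where
  "ONES k \<longleftrightarrow> (\<forall>x \<delta>. P k (x + \<delta>) \<le> P k x + P k \<delta>)"

definition MINS :: "nat \<Rightarrow> bool" where
  "MINS k \<longleftrightarrow> (\<forall>x \<delta>. Mn k x + Mn k \<delta> \<le> Mn k (x + \<delta>))"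

lemma ONES1: "ONES 1"
  unfolding ONES_def
proof (intro allI)
  fix x \<delta> :: nat
  show "P 1 (x + \<delta>) \<le> P 1 x + P 1 \<delta>"
  proof (cases "x = 0 \<or> \<delta> = 0")
    case True then show ?thesis by auto
  next
    case False
    then have "P 1 x \<ge> 1" using P_pos by simp
    then show ?thesis using P1_le[of "x + \<delta>"] by simp
  qed
qed

lemma MINS_of_ONES:
  assumes k: "k \<ge> 1" and ones: "ONES k"
  shows "MINS k"
proof -
  have "\<forall>x \<delta>. x + \<delta> = n \<longrightarrow> Mn k x + Mn k \<delta> \<le> Mn k (x + \<delta>)" for n
  proof (induction n rule: less_induct)
    case (less n)
    show ?case
    proof (intro allI impI)
      fix x \<delta> assume n: "x + \<delta> = n"
      show "Mn k x + Mn k \<delta> \<le> Mn k (x + \<delta>)"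
      proof (cases "x + \<delta> = 0")
        case True then show ?thesis by (simp add: Mn_0)
      next
        case False
        define Qx where "Qx = Q k x"
        define Qd where "Qd = Q k \<delta>"
        define Qs where "Qs = Q k (x + \<delta>)"
        have o: "P k (x + \<delta>) \<le> P k x + P k \<delta>" using ones unfolding ONES_def by blast
        have le1: "P k x \<le> x" "P k \<delta> \<le> \<delta>" "P k (x + \<delta>) \<le> x + \<delta>" using P_le[OF k] by auto
        have pos: "P k (x + \<delta>) \<ge> 1" using P_pos[OF k, of "x + \<delta>"] False by simp
        have sQ: "Qx + Qd \<le> Qs" unfolding Qx_def Qd_def Qs_def Q_def using o le1 by simp
        have lt: "Qs < n" unfolding Qs_def Q_def using pos n le1 by simp
        have ih: "Mn k Qx + Mn k (Qs - Qx) \<le> Mn k (Qx + (Qs - Qx))"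
          using less.IH[OF lt] sQ by auto
        have "Mn k Qd \<le> Mn k (Qs - Qx)" using Mn_mono[OF k] sQ by simp
        then have "Mn k Qx + Mn k Qd \<le> Mn k Qs" using ih sQ by simp
        moreover have "Mn k x = x + Mn k Qx" "Mn k \<delta> = \<delta> + Mn k Qd" "Mn k (x + \<delta>) = (x + \<delta>) + Mn k Qs"
          unfolding Qx_def Qd_def Qs_def by (rule Mn_rec[OF k])+
        ultimately show ?thesis by simp
      qed
    qed
  qed
  then show ?thesis unfolding MINS_def by blast
qed


definition Phi :: "nat set \<Rightarrow> nat \<Rightarrow> nat set" where "Phi v j = insert j (sh v)"

lemma mem_sh: "x \<ge> 1 \<Longrightarrow> x \<in> sh v \<longleftrightarrow> x - 1 \<in> v"
  unfolding sh_def by (cases x) auto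

lemma mem_sh0: "0 \<notin> sh v"
  unfolding sh_def by auto

lemma j_notin_sh:
  assumes "finite v" "j \<le> Min v"
  shows "j \<notin> sh v"
proof
  assume "j \<in> sh v"
  then obtain x where "x \<in> v" "j = Suc x" unfolding sh_def by blast
  then show False using assms Min_le[OF assms(1)] by fastforce
qed

lemma Phi_binomN:
  assumes k: "k \<ge> 2" and v: "v \<in> binomN (k - 1)" and j: "1 \<le> j" "j \<le> Min v"
  shows "Phi v j \<in> binomN k"
proof -
  have "j \<notin> sh v" using j_notin_sh binomN_D(1)[OF v] j(2) by blast
  moreover have "sh v \<in> binomN (k - 1)" using sh_binomN[OF v] .
  ultimately show ?thesis unfolding Phi_def using k j(1)
    by (intro binomN_I) (auto simp: binomN_D mem_sh0)
qed

lemma Phi_Min: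
  assumes "finite v" "j \<le> Min v"
  shows "Min (Phi v j) = j"
proof (rule Min_eqI)
  show "finite (Phi v j)" unfolding Phi_def sh_def using assms(1) by simp
  show "j \<in> Phi v j" unfolding Phi_def by simp
  fix y assume "y \<in> Phi v j"
  then show "j \<le> y"
  proof (cases "y = j")
    case False
    then have "y \<in> sh v" using \<open>y \<in> Phi v j\<close> unfolding Phi_def by simp
    then obtain x where "x \<in> v" "y = Suc x" unfolding sh_def by blast
    moreover have "Min v \<le> x" using Min_le[OF assms(1) \<open>x \<in> v\<close>] .
    ultimately show ?thesis using assms(2) by simp
  qed simp
qed

lemma Phi_inj:
  assumes "finite v1" "finite v2" "j1 \<le> Min v1" "j2 \<le> Min v2" "Phi v1 j1 = Phi v2 j2"
  shows "v1 = v2" "j1 = j2"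
proof -
  show "j1 = j2" using Phi_Min[OF assms(1,3)] Phi_Min[OF assms(2,4)] assms(5) by simp
  then have "sh v1 = sh v2"
    using assms(5) j_notin_sh[OF assms(1,3)] j_notin_sh[OF assms(2,4)] unfolding Phi_def
    by (metis Diff_insert_absorb)
  then show "v1 = v2" by (rule sh_inj)
qed

lemma Phi_surj:
  assumes k: "k \<ge> 2" and u: "u \<in> binomN k"
  shows "unsh (u - {Min u}) \<in> binomN (k - 1)" "1 \<le> Min u"
    "Min u \<le> Min (unsh (u - {Min u}))" "Phi (unsh (u - {Min u})) (Min u) = u"
proof -
  have f: "finite u" and u0: "0 \<notin> u" and cu: "card u = k" using binomN_D[OF u] by auto
  have ne: "u \<noteq> {}" using cu k by auto
  define j where "j = Min u"
  have ju: "j \<in> u" unfolding j_def using Min_in[OF f ne] .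
  have jle: "\<And>x. x \<in> u \<Longrightarrow> j \<le> x" unfolding j_def using Min_le[OF f] by blast
  show j1: "1 \<le> Min u" using ju u0 unfolding j_def[symmetric] by (cases j) auto
  have b1: "u - {j} \<in> binomN (k - 1)" using f u0 cu ju by (intro binomN_I) auto
  have n1: "1 \<notin> u - {j}"
  proof
    assume "1 \<in> u - {j}"
    then have "j \<le> 1" "j \<noteq> 1" using jle by auto
    then have "j = 0" by simp
    then show False using ju u0 by simp
  qed
  show vb: "unsh (u - {Min u}) \<in> binomN (k - 1)" using unsh_binomN[OF b1 n1] unfolding j_def .
  have shv: "sh (unsh (u - {j})) = u - {j}" using u0 by (intro sh_unsh) simp
  show "Phi (unsh (u - {Min u})) (Min u) = u"
    unfolding Phi_def j_def[symmetric] shv using ju by auto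
  have fv: "finite (unsh (u - {j}))" using binomN_D(1)[OF vb] unfolding j_def .
  have nev: "unsh (u - {j}) \<noteq> {}" using binomN_ne[OF vb] k unfolding j_def by simp
  have "j \<le> Min (unsh (u - {j}))"
  proof -
    have "Min (unsh (u - {j})) \<in> unsh (u - {j})" using Min_in[OF fv nev] .
    then obtain x where x: "x \<in> u - {j}" "Min (unsh (u - {j})) = x - 1" unfolding unsh_def by blast
    then have "j < x" using jle by fastforce
    then show ?thesis using x(2) by simp
  qed
  then show "Min u \<le> Min (unsh (u - {Min u}))" unfolding j_def .
qed

lemma Phi_less_gen:
  assumes k: "k \<ge> 2" and v': "v' \<in> binomN (k - 1)" and v: "v \<in> binomN (k - 1)"
    and j: "1 \<le> j" "j \<le> Min v'" and i: "1 \<le> i" "i \<le> Min v" and lt: "sq_less v' v"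
  shows "sq_less (Phi v' j) (Phi v i)"
proof -
  have fv': "finite v'" and fv: "finite v" using binomN_D(1) v' v by auto
  obtain a where a: "a \<in> v" "a \<notin> v'" "\<forall>x>a. x \<in> v' \<longleftrightarrow> x \<in> v"
    using lt sq_less_iff[OF fv' fv] by blast
  have ja: "j \<le> a"
  proof (rule ccontr)
    assume "\<not> j \<le> a"
    then have aj: "a < j" by simp
    have sub: "v' \<subseteq> v"
    proof
      fix x assume "x \<in> v'"
      then have "Min v' \<le> x" using Min_le[OF fv'] by blast
      then have "x > a" using aj j(2) by simp
      then show "x \<in> v" using a(3) \<open>x \<in> v'\<close> by blast
    qed
    have "card v' = card v" using binomN_D(2) v' v by metis
    then have "v' = v" using card_subset_eq[OF fv sub] by simp
    then show False using a by simp
  qed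
  have ia: "i \<le> a" using Min_le[OF fv a(1)] i(2) by simp
  have fP: "finite (Phi v' j)" "finite (Phi v i)" unfolding Phi_def sh_def using fv fv' by auto
  have "Suc a \<in> Phi v i" unfolding Phi_def sh_def using a(1) by simp
  moreover have "Suc a \<notin> Phi v' j" unfolding Phi_def sh_def using a(2) ja by auto
  moreover have "\<forall>x>Suc a. x \<in> Phi v' j \<longleftrightarrow> x \<in> Phi v i"
  proof (intro allI impI)
    fix x assume x: "x > Suc a"
    then have "x \<noteq> j" "x \<noteq> i" "x \<ge> 1" using ja ia by auto
    then have "x \<in> Phi v' j \<longleftrightarrow> x - 1 \<in> v'" "x \<in> Phi v i \<longleftrightarrow> x - 1 \<in> v"
      unfolding Phi_def using mem_sh by auto
    moreover have "x - 1 > a" using x by simp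
    ultimately show "x \<in> Phi v' j \<longleftrightarrow> x \<in> Phi v i" using a(3) by blast
  qed
  ultimately show ?thesis using sq_less_iff[OF fP] by blast
qed

lemma ins1_Phi: "ins1 v = Phi v 1"
  unfolding ins1_eq Phi_def ..

lemma Phi_less_ins1:
  assumes k: "k \<ge> 2" and v': "v' \<in> binomN (k - 1)" and v: "v \<in> binomN (k - 1)"
    and j: "1 \<le> j" "j \<le> Min v'"
  shows "sq_less (Phi v' j) (ins1 v) \<longleftrightarrow> sq_less v' v"
proof
  have fv': "finite v'" and fv: "finite v" using binomN_D(1) v' v by auto
  have ne: "v \<noteq> {}" using binomN_ne[OF v] k by simp
  have m1: "1 \<le> Min v"
  proof -
    have "Min v \<in> v" using Min_in[OF fv ne] .
    then show ?thesis using binomN_D(4)[OF v] by (cases "Min v") auto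
  qed
  show "sq_less v' v \<Longrightarrow> sq_less (Phi v' j) (ins1 v)"
    unfolding ins1_Phi using Phi_less_gen[OF k v' v j] m1 by simp
  assume h: "sq_less (Phi v' j) (ins1 v)"
  have fP: "finite (Phi v' j)" "finite (Phi v 1)" unfolding Phi_def sh_def using fv fv' by auto
  show "sq_less v' v"
  proof (rule ccontr)
    assume nl: "\<not> sq_less v' v"
    show False
    proof (cases "v' = v")
      case True
      show False
      proof (cases "j = 1")
        case True
        then show False using h \<open>v' = v\<close> sq_less_irrefl unfolding ins1_Phi by simp
      next
        case False
        obtain a where a: "a \<in> Phi v 1" "a \<notin> Phi v' j" "\<forall>x>a. x \<in> Phi v' j \<longleftrightarrow> x \<in> Phi v 1"
          using h sq_less_iff[OF fP] unfolding ins1_Phi by blast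
        have "a = 1" using a(1,2) \<open>v' = v\<close> unfolding Phi_def by auto
        moreover have "j > a" using False j(1) \<open>a = 1\<close> by simp
        ultimately have "j \<in> Phi v' j \<longleftrightarrow> j \<in> Phi v 1" using a(3) by blast
        then have "j \<in> Phi v 1" unfolding Phi_def by simp
        moreover have "j \<notin> sh v" using j_notin_sh[OF fv] j(2) \<open>v' = v\<close> by simp
        ultimately show False using False unfolding Phi_def by auto
      qed
    next
      case False
      then have "sq_less v v'" using nl sq_less_total[OF fv' fv] by blast
      then have "sq_less (Phi v 1) (Phi v' j)" using Phi_less_gen[OF k v v' _ m1 j] by simp
      then show False using h sq_less_asym[OF fP] unfolding ins1_Phi by blast
    qed
  qed
qed


lemma M3:
  assumes k: "k \<ge> 2" and v: "v \<in> binomN (k - 1)"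
  shows "rk k (ins1 v) = Mn (k - 1) (rk (k - 1) v)"
proof -
  define V where "V = {v' \<in> binomN (k - 1). sq_less v' v}"
  define S where "S = (SIGMA v':V. {1..Min v'})"
  have finV: "finite V" unfolding V_def using below_finite binomN_D(1)[OF v] by blast
  have eq: "{u \<in> binomN k. sq_less u (ins1 v)} = (\<lambda>(v', j). Phi v' j) ` S"
  proof
    show "{u \<in> binomN k. sq_less u (ins1 v)} \<subseteq> (\<lambda>(v', j). Phi v' j) ` S"
    proof
      fix u assume "u \<in> {u \<in> binomN k. sq_less u (ins1 v)}"
      then have u: "u \<in> binomN k" "sq_less u (ins1 v)" by auto
      note ps = Phi_surj[OF k u(1)]
      define v' where "v' = unsh (u - {Min u})"
      have "sq_less (Phi v' (Min u)) (ins1 v)" using ps(4) u(2) unfolding v'_def by simp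
      then have "sq_less v' v" using Phi_less_ins1[OF k _ v ps(2)] ps(1,3) unfolding v'_def by blast
      then have "(v', Min u) \<in> S" unfolding S_def V_def v'_def using ps(1-3) by auto
      then show "u \<in> (\<lambda>(v', j). Phi v' j) ` S" using ps(4) unfolding v'_def by force
    qed
    show "(\<lambda>(v', j). Phi v' j) ` S \<subseteq> {u \<in> binomN k. sq_less u (ins1 v)}"
    proof
      fix u assume "u \<in> (\<lambda>(v', j). Phi v' j) ` S"
      then obtain v' j where vj: "v' \<in> binomN (k - 1)" "sq_less v' v" "1 \<le> j" "j \<le> Min v'" "u = Phi v' j"
        unfolding S_def V_def by auto
      have "u \<in> binomN k" using Phi_binomN[OF k vj(1,3,4)] vj(5) by simp
      moreover have "sq_less u (ins1 v)" using Phi_less_ins1[OF k vj(1) v vj(3,4)] vj(2,5) by simp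
      ultimately show "u \<in> {u \<in> binomN k. sq_less u (ins1 v)}" by simp
    qed
  qed
  have inj: "inj_on (\<lambda>(v', j). Phi v' j) S"
  proof (rule inj_onI)
    fix p q assume p: "p \<in> S" and q: "q \<in> S" and e: "(\<lambda>(v', j). Phi v' j) p = (\<lambda>(v', j). Phi v' j) q"
    obtain v1 j1 where p': "p = (v1, j1)" by (cases p)
    obtain v2 j2 where q': "q = (v2, j2)" by (cases q)
    have h: "v1 \<in> binomN (k - 1)" "j1 \<le> Min v1" "v2 \<in> binomN (k - 1)" "j2 \<le> Min v2"
      using p q unfolding p' q' S_def V_def by auto
    have "Phi v1 j1 = Phi v2 j2" using e unfolding p' q' by simp
    then have "v1 = v2" "j1 = j2" using Phi_inj[OF binomN_D(1)[OF h(1)] binomN_D(1)[OF h(3)] h(2) h(4)] by auto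
    then show "p = q" unfolding p' q' by simp
  qed
  have "rk k (ins1 v) = card S" unfolding rk_def eq using card_image[OF inj] .
  also have "\<dots> = (\<Sum>v'\<in>V. card {1..Min v'})" unfolding S_def using finV by (simp add: card_SigmaI)
  also have "\<dots> = (\<Sum>v'\<in>V. Min v')" by simp
  also have "V = Cs (k - 1) (rk (k - 1) v)" unfolding V_def using rk_lt_iff_Cs[OF v v] .
  finally show ?thesis unfolding Mn_def .
qed

lemma POS:
  assumes k: "k \<ge> 2"
  shows "Mn (k - 1) i < y \<longleftrightarrow> i < P k y"
proof -
  have k1: "k - 1 \<ge> 1" "k \<ge> 1" using k by auto
  obtain v where v: "v \<in> binomN (k - 1)" "rk (k - 1) v = i" using rk_surj[OF k1(1)] by blast
  have "Mn (k - 1) i = rk k (ins1 v)" using M3[OF k v(1)] v(2) by simp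
  moreover have "i < P k y \<longleftrightarrow> v \<in> Cs (k - 1) (P k y)" unfolding Cs_def using v by simp
  moreover have "v \<in> Cs (k - 1) (P k y) \<longleftrightarrow> ins1 v \<in> ins1 ` Cs (k - 1) (P k y)"
  proof
    assume "ins1 v \<in> ins1 ` Cs (k - 1) (P k y)"
    then obtain w where w: "w \<in> Cs (k - 1) (P k y)" "ins1 v = ins1 w" by blast
    have "w \<in> binomN (k - 1)" using w(1) Cs_sub by blast
    then have "v = w" using ins1_inj binomN_D(4) v(1) w(2) by blast
    then show "v \<in> Cs (k - 1) (P k y)" using w by simp
  qed auto
  moreover have "ins1 v \<in> ins1 ` Cs (k - 1) (P k y) \<longleftrightarrow> rk k (ins1 v) < y"
  proof -
    have b: "ins1 v \<in> binomN k" using ins1_binomN[OF v(1) k1(2)] .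
    have "ins1 ` Cs (k - 1) (P k y) = {u \<in> Cs k y. 1 \<in> u}" using M1[OF k] by simp
    then have "ins1 v \<in> ins1 ` Cs (k - 1) (P k y) \<longleftrightarrow> ins1 v \<in> {u \<in> Cs k y. 1 \<in> u}" by simp
    also have "\<dots> \<longleftrightarrow> rk k (ins1 v) < y" unfolding Cs_def using b one_in_ins1 by simp
    finally show ?thesis .
  qed
  ultimately show ?thesis by simp
qed

lemma ONES_of_MINS:
  assumes k: "k \<ge> 2" and mins: "MINS (k - 1)"
  shows "ONES k"
  unfolding ONES_def
proof (intro allI)
  fix x \<delta>
  define p0 where "p0 = P k x"
  define p1 where "p1 = P k (x + \<delta>)"
  have mono: "p0 \<le> p1" unfolding p0_def p1_def by (rule P_mono) simp
  show "P k (x + \<delta>) \<le> P k x + P k \<delta>"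
  proof (cases "p1 \<le> p0")
    case True then show ?thesis unfolding p0_def p1_def by simp
  next
    case False
    define c where "c = p1 - p0"
    have c1: "c \<ge> 1" using False unfolding c_def by simp
    have "p0 + (c - 1) < p1" using c1 mono unfolding c_def by simp
    then have a1: "Mn (k - 1) (p0 + (c - 1)) < x + \<delta>" using POS[OF k] unfolding p1_def by blast
    have a2: "\<not> Mn (k - 1) p0 < x" using POS[OF k] unfolding p0_def by blast
    have "Mn (k - 1) p0 + Mn (k - 1) (c - 1) \<le> Mn (k - 1) (p0 + (c - 1))"
      using mins unfolding MINS_def by blast
    then have "Mn (k - 1) (c - 1) < \<delta>" using a1 a2 by simp
    then have "c - 1 < P k \<delta>" using POS[OF k] by blast
    then show ?thesis using c1 mono unfolding c_def p0_def p1_def by simp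
  qed
qed

lemma ONES_MINS:
  assumes "k \<ge> 1"
  shows "ONES k \<and> MINS k"
  using assms
proof (induction k rule: dec_induct)
  case base
  then show ?case using ONES1 MINS_of_ONES by simp
next
  case (step k)
  have "ONES (Suc k)" using ONES_of_MINS[of "Suc k"] step by simp
  then show ?case using MINS_of_ONES by simp
qed

lemma ONES_all: "k \<ge> 1 \<Longrightarrow> P k (x + \<delta>) \<le> P k x + P k \<delta>"
  using ONES_MINS unfolding ONES_def by blast


lemma card_sub_s: "card {w \<in> binomN e. w \<subseteq> {..s}} = s choose e"
proof -
  have "{w \<in> binomN e. w \<subseteq> {..s}} = {B. B \<subseteq> {1..s} \<and> card B = e}"
  proof
    show "{w \<in> binomN e. w \<subseteq> {..s}} \<subseteq> {B. B \<subseteq> {1..s} \<and> card B = e}"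
      using binomN_D by fastforce
    show "{B. B \<subseteq> {1..s} \<and> card B = e} \<subseteq> {w \<in> binomN e. w \<subseteq> {..s}}"
    proof
      fix B assume "B \<in> {B. B \<subseteq> {1..s} \<and> card B = e}"
      then have B: "B \<subseteq> {1..s}" "card B = e" by auto
      have "finite B" using B(1) finite_subset by blast
      moreover have "0 \<notin> B" using B(1) by auto
      ultimately have "B \<in> binomN e" using B(2) by (intro binomN_I)
      then show "B \<in> {w \<in> binomN e. w \<subseteq> {..s}}" using B(1) by auto
    qed
  qed
  then show ?thesis using n_subsets[of "{1..s}" e] by simp
qed

lemma finite_sub_s: "finite {w \<in> binomN e. w \<subseteq> {..s}}"
proof -
  have "{w \<in> binomN e. w \<subseteq> {..s}} \<subseteq> Pow {..s}" by auto
  then show ?thesis by (rule finite_subset) simp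
qed

lemma SUBS:
  assumes u: "u \<in> binomN e"
  shows "u \<subseteq> {..s} \<longleftrightarrow> rk e u < s choose e"
proof
  assume us: "u \<subseteq> {..s}"
  have "{w \<in> binomN e. sq_less w u} \<subseteq> {w \<in> binomN e. w \<subseteq> {..s}} - {u}"
  proof
    fix w assume "w \<in> {w \<in> binomN e. sq_less w u}"
    then have w: "w \<in> binomN e" "sq_less w u" by auto
    have fu: "finite u" using binomN_D(1)[OF u] .
    have "u \<noteq> {}" using w(2) unfolding sq_less_def by auto
    have "w \<subseteq> {..Max u}" using below_subset[OF fu binomN_D(1)[OF w(1)] w(2)] .
    moreover have "Max u \<le> s" using us Max_in[OF fu \<open>u \<noteq> {}\<close>] by auto
    ultimately have "w \<subseteq> {..s}" by auto
    then show "w \<in> {w \<in> binomN e. w \<subseteq> {..s}} - {u}" using w sq_less_irrefl by auto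
  qed
  then have "rk e u \<le> card ({w \<in> binomN e. w \<subseteq> {..s}} - {u})"
    unfolding rk_def using finite_sub_s by (intro card_mono) auto
  also have "\<dots> = (s choose e) - 1"
    using u us card_sub_s finite_sub_s by (simp add: card_Diff_singleton)
  also have "\<dots> < s choose e"
  proof -
    have "u \<in> {w \<in> binomN e. w \<subseteq> {..s}}" using u us by simp
    then have "card {w \<in> binomN e. w \<subseteq> {..s}} > 0" using finite_sub_s card_gt_0_iff by blast
    then show ?thesis using card_sub_s by simp
  qed
  finally show "rk e u < s choose e" .
next
  assume r: "rk e u < s choose e"
  show "u \<subseteq> {..s}"
  proof (rule ccontr)
    assume "\<not> u \<subseteq> {..s}"
    then obtain x where x0: "x \<in> u" "x \<notin> {..s}" by blast
    then have x: "x \<in> u" "x > s" by auto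
    have fu: "finite u" using binomN_D(1)[OF u] .
    have ne: "u \<noteq> {}" using x by auto
    define a where "a = Max u"
    have a: "a \<in> u" "a > s" unfolding a_def using Max_in[OF fu ne] Max_ge[OF fu x(1)] x(2) by auto
    have "{w \<in> binomN e. w \<subseteq> {..s}} \<subseteq> {w \<in> binomN e. sq_less w u}"
    proof
      fix w assume "w \<in> {w \<in> binomN e. w \<subseteq> {..s}}"
      then have w: "w \<in> binomN e" "w \<subseteq> {..s}" by auto
      have "a \<notin> w" using w(2) a(2) by auto
      moreover have "\<forall>y>a. y \<in> w \<longleftrightarrow> y \<in> u"
        using w(2) a(2) Max_ge[OF fu] unfolding a_def by fastforce
      ultimately have "sq_less w u" using sq_less_iff[OF binomN_D(1)[OF w(1)] fu] a(1) by blast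
      then show "w \<in> {w \<in> binomN e. sq_less w u}" using w(1) by simp
    qed
    then have "s choose e \<le> rk e u" unfolding rk_def card_sub_s[symmetric]
      using below_finite[OF fu] by (intro card_mono) auto
    then show False using r by simp
  qed
qed

lemma B1:
  assumes d: "d \<ge> 1" and v: "v \<in> binomN (d - 1)" and vs: "v \<subseteq> {..s}"
  shows "rk d (insert (Suc s) v) = (s choose d) + rk (d - 1) v"
proof -
  let ?t = "Suc s"
  have fv: "finite v" using binomN_D(1)[OF v] .
  have tv: "?t \<notin> v" using vs by auto
  define A where "A = {w \<in> binomN d. w \<subseteq> {..s}}"
  define V where "V = {v' \<in> binomN (d - 1). sq_less v' v}"
  have ins_b: "insert ?t v' \<in> binomN d" if "v' \<in> binomN (d - 1)" "?t \<notin> v'" for v'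
    using binomN_D[OF that(1)] that(2) d by (intro binomN_I) auto
  have Vs: "v' \<subseteq> {..s}" if "v' \<in> V" for v'
  proof -
    have "v' \<in> binomN (d - 1)" "sq_less v' v" using that V_def by auto
    then have "v \<noteq> {}" "v' \<subseteq> {..Max v}" using below_subset[OF fv binomN_D(1)] unfolding sq_less_def by auto
    moreover have "Max v \<le> s" using vs Max_in[OF fv \<open>v \<noteq> {}\<close>] by auto
    ultimately show ?thesis by auto
  qed
  have eq: "{w \<in> binomN d. sq_less w (insert ?t v)} = A \<union> insert ?t ` V"
  proof
    show "{w \<in> binomN d. sq_less w (insert ?t v)} \<subseteq> A \<union> insert ?t ` V"
    proof
      fix w assume "w \<in> {w \<in> binomN d. sq_less w (insert ?t v)}"
      then have w: "w \<in> binomN d" "sq_less w (insert ?t v)" by auto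
      have fw: "finite w" using binomN_D(1)[OF w(1)] .
      show "w \<in> A \<union> insert ?t ` V"
      proof (cases "?t \<in> w")
        case True
        define v' where "v' = w - {?t}"
        have wv: "w = insert ?t v'" unfolding v'_def using True by auto
        have tv': "?t \<notin> v'" unfolding v'_def by simp
        have v'b: "v' \<in> binomN (d - 1)" using binomN_D[OF w(1)] True unfolding v'_def
          by (intro binomN_I) auto
        have "sq_less v' v" using w(2) sq_less_insert[OF binomN_D(1)[OF v'b] fv tv' tv] wv by simp
        then show ?thesis unfolding V_def using v'b wv by blast
      next
        case False
        have "w \<subseteq> {..s}"
        proof
          fix x assume x: "x \<in> w"
          obtain y where y: "y \<in> insert ?t v" "x \<le> y"
            using sq_less_bound[OF _ _ w(2) fw x] fv by auto
          have "y \<le> ?t" using y(1) vs by auto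
          then have "x \<le> ?t" using y(2) by simp
          moreover have "x \<noteq> ?t" using x False by auto
          ultimately show "x \<in> {..s}" by simp
        qed
        then show ?thesis unfolding A_def using w(1) by blast
      qed
    qed
    show "A \<union> insert ?t ` V \<subseteq> {w \<in> binomN d. sq_less w (insert ?t v)}"
    proof
      fix w assume "w \<in> A \<union> insert ?t ` V"
      then show "w \<in> {w \<in> binomN d. sq_less w (insert ?t v)}"
      proof
        assume "w \<in> A"
        then have w: "w \<in> binomN d" "w \<subseteq> {..s}" unfolding A_def by auto
        have "sq_less w (insert ?t v)"
        proof -
          have "?t \<notin> w" using w(2) by auto
          moreover have "\<forall>y>?t. y \<in> w \<longleftrightarrow> y \<in> insert ?t v" using w(2) vs by auto
          ultimately show ?thesis using sq_less_iff[OF binomN_D(1)[OF w(1)]] fv by blast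
        qed
        then show ?thesis using w(1) by simp
      next
        assume "w \<in> insert ?t ` V"
        then obtain v' where v': "v' \<in> V" "w = insert ?t v'" by blast
        have v'b: "v' \<in> binomN (d - 1)" "sq_less v' v" using v'(1) V_def by auto
        have tv': "?t \<notin> v'" using Vs[OF v'(1)] by auto
        have "sq_less w (insert ?t v)"
          using sq_less_insert[OF binomN_D(1)[OF v'b(1)] fv tv' tv] v'b(2) v'(2) by simp
        then show ?thesis using ins_b[OF v'b(1) tv'] v'(2) by simp
      qed
    qed
  qed
  have disj: "A \<inter> insert ?t ` V = {}" unfolding A_def by auto
  have finA: "finite A" unfolding A_def using finite_sub_s .
  have finV: "finite V" unfolding V_def using below_finite[OF fv] .
  have inj: "inj_on (insert ?t) V"
  proof (rule inj_onI)
    fix x y assume "x \<in> V" "y \<in> V" "insert ?t x = insert ?t y"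
    moreover have "?t \<notin> x" using Vs[OF \<open>x \<in> V\<close>] by auto
    moreover have "?t \<notin> y" using Vs[OF \<open>y \<in> V\<close>] by auto
    ultimately show "x = y" by (metis Diff_insert_absorb)
  qed
  have "rk d (insert ?t v) = card (A \<union> insert ?t ` V)" unfolding rk_def eq ..
  also have "\<dots> = card A + card (insert ?t ` V)" using disj finA finV by (intro card_Un_disjoint) auto
  also have "card A = s choose d" unfolding A_def using card_sub_s .
  also have "card (insert ?t ` V) = card V" using card_image[OF inj] .
  also have "card V = rk (d - 1) v" unfolding V_def rk_def ..
  finally show ?thesis .
qed

lemma card_sub_s_one:
  assumes d: "d \<ge> 1" and s1: "s \<ge> 1"
  shows "card {u \<in> binomN d. u \<subseteq> {..s} \<and> 1 \<in> u} = (s - 1) choose (d - 1)"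
proof -
  have "{u \<in> binomN d. u \<subseteq> {..s} \<and> 1 \<in> u} = insert 1 ` {B. B \<subseteq> {2..s} \<and> card B = d - 1}"
  proof
    show "{u \<in> binomN d. u \<subseteq> {..s} \<and> 1 \<in> u} \<subseteq> insert 1 ` {B. B \<subseteq> {2..s} \<and> card B = d - 1}"
    proof
      fix u assume "u \<in> {u \<in> binomN d. u \<subseteq> {..s} \<and> 1 \<in> u}"
      then have u: "u \<in> binomN d" "u \<subseteq> {..s}" "1 \<in> u" by auto
      have "u - {1} \<subseteq> {2..s}"
      proof
        fix x assume "x \<in> u - {1}"
        then have "x \<in> u" "x \<noteq> 1" by auto
        moreover have "x \<noteq> 0" using binomN_D(4)[OF u(1)] \<open>x \<in> u\<close> by metis
        moreover have "x \<le> s" using u(2) \<open>x \<in> u\<close> by auto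
        ultimately show "x \<in> {2..s}" by simp
      qed
      moreover have "card (u - {1}) = d - 1" using binomN_D[OF u(1)] u(3) by simp
      moreover have "u = insert 1 (u - {1})" using u(3) by auto
      ultimately show "u \<in> insert 1 ` {B. B \<subseteq> {2..s} \<and> card B = d - 1}" by blast
    qed
    show "insert 1 ` {B. B \<subseteq> {2..s} \<and> card B = d - 1} \<subseteq> {u \<in> binomN d. u \<subseteq> {..s} \<and> 1 \<in> u}"
    proof
      fix u assume "u \<in> insert 1 ` {B. B \<subseteq> {2..s} \<and> card B = d - 1}"
      then obtain B where B: "B \<subseteq> {2..s}" "card B = d - 1" "u = insert 1 B" by blast
      have fB: "finite B" using B(1) finite_subset by blast
      have "1 \<notin> B" using B(1) by auto
      then have "card u = d" using B fB d by simp
      moreover have "finite u" "0 \<notin> u" using B fB by auto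
      ultimately have "u \<in> binomN d" by (intro binomN_I)
      moreover have "u \<subseteq> {..s}" "1 \<in> u" using B s1 by auto
      ultimately show "u \<in> {u \<in> binomN d. u \<subseteq> {..s} \<and> 1 \<in> u}" by simp
    qed
  qed
  moreover have "inj_on (insert 1) {B. B \<subseteq> {2..s} \<and> card B = d - 1}"
  proof (rule inj_onI)
    fix x y assume "x \<in> {B. B \<subseteq> {2..s} \<and> card B = d - 1}" "y \<in> {B. B \<subseteq> {2..s} \<and> card B = d - 1}"
      "insert (1::nat) x = insert 1 y"
    moreover have "1 \<notin> x" "1 \<notin> y" using calculation by auto
    ultimately show "x = y" by (metis Diff_insert_absorb)
  qed
  ultimately have "card {u \<in> binomN d. u \<subseteq> {..s} \<and> 1 \<in> u} = card {B. B \<subseteq> {2..s} \<and> card B = d - 1}"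
    by (simp add: card_image)
  also have "\<dots> = card {2..s} choose (d - 1)" by (rule n_subsets) simp
  also have "card {2..s} = s - 1" by simp
  finally show ?thesis .
qed


lemma finite_Cs_all: "finite (Cs d m)"
  by (cases "d = 0") (auto simp: Cs_0 finite_Cs)

lemma BLK:
  assumes d: "d \<ge> 1" and s: "s \<ge> 1" and r: "r \<le> s choose (d - 1)"
  shows "P d ((s choose d) + r) = ((s - 1) choose (d - 1)) + P (d - 1) r"
proof -
  define m where "m = (s choose d) + r"
  define A1 where "A1 = {u \<in> binomN d. u \<subseteq> {..s} \<and> 1 \<in> u}"
  define V1 where "V1 = {v \<in> Cs (d - 1) r. 1 \<in> v}"
  have pas: "Suc s choose d = (s choose d) + (s choose (d - 1))"
    using d by (cases d) auto
  have Vsub: "v \<subseteq> {..s}" if "v \<in> V1" for v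
  proof -
    have "v \<in> binomN (d - 1)" "rk (d - 1) v < r" using that unfolding V1_def Cs_def by auto
    then show ?thesis using SUBS[of v "d - 1" s] r by simp
  qed
  have eq: "{u \<in> Cs d m. 1 \<in> u} = A1 \<union> insert (Suc s) ` V1"
  proof
    show "{u \<in> Cs d m. 1 \<in> u} \<subseteq> A1 \<union> insert (Suc s) ` V1"
    proof
      fix u assume "u \<in> {u \<in> Cs d m. 1 \<in> u}"
      then have u: "u \<in> binomN d" "rk d u < m" "1 \<in> u" unfolding Cs_def by auto
      show "u \<in> A1 \<union> insert (Suc s) ` V1"
      proof (cases "u \<subseteq> {..s}")
        case True then show ?thesis unfolding A1_def using u by blast
      next
        case False
        then have ge: "s choose d \<le> rk d u" using SUBS[OF u(1), of s] by simp
        have "rk d u < Suc s choose d" using u(2) pas r unfolding m_def by simp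
        then have us: "u \<subseteq> {..Suc s}" using SUBS[OF u(1), of "Suc s"] by simp
        have t: "Suc s \<in> u" using False us by (metis atMost_iff le_SucE subsetD subsetI)
        define v where "v = u - {Suc s}"
        have vs: "v \<subseteq> {..s}" unfolding v_def using us by (auto simp: le_Suc_eq)
        have vb: "v \<in> binomN (d - 1)" unfolding v_def using binomN_D[OF u(1)] t by (intro binomN_I) auto
        have uv: "u = insert (Suc s) v" unfolding v_def using t by auto
        have "rk d u = (s choose d) + rk (d - 1) v" using B1[OF d vb vs] uv by simp
        then have "rk (d - 1) v < r" using u(2) unfolding m_def by simp
        moreover have "1 \<in> v" unfolding v_def using u(3) s by simp
        ultimately have "v \<in> V1" unfolding V1_def Cs_def using vb by simp
        then show ?thesis using uv by blast
      qed
    qed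
    show "A1 \<union> insert (Suc s) ` V1 \<subseteq> {u \<in> Cs d m. 1 \<in> u}"
    proof
      fix u assume "u \<in> A1 \<union> insert (Suc s) ` V1"
      then show "u \<in> {u \<in> Cs d m. 1 \<in> u}"
      proof
        assume "u \<in> A1"
        then have u: "u \<in> binomN d" "u \<subseteq> {..s}" "1 \<in> u" unfolding A1_def by auto
        then have "rk d u < s choose d" using SUBS by blast
        then show ?thesis unfolding Cs_def m_def using u by simp
      next
        assume "u \<in> insert (Suc s) ` V1"
        then obtain v where v: "v \<in> V1" "u = insert (Suc s) v" by blast
        have vb: "v \<in> binomN (d - 1)" "rk (d - 1) v < r" "1 \<in> v" using v(1) unfolding V1_def Cs_def by auto
        have vs: "v \<subseteq> {..s}" using Vsub[OF v(1)] .
        have "Suc s \<notin> v" using vs by auto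
        then have ub: "u \<in> binomN d" using binomN_D[OF vb(1)] v(2) d by (intro binomN_I) auto
        have "rk d u = (s choose d) + rk (d - 1) v" using B1[OF d vb(1) vs] v(2) by simp
        then show ?thesis unfolding Cs_def m_def using ub vb v(2) by simp
      qed
    qed
  qed
  have disj: "A1 \<inter> insert (Suc s) ` V1 = {}" unfolding A1_def by auto
  have finA: "finite A1" unfolding A1_def using finite_sub_s by (rule rev_finite_subset) auto
  have finV: "finite V1" unfolding V1_def using finite_Cs_all by simp
  have inj: "inj_on (insert (Suc s)) V1"
  proof (rule inj_onI)
    fix x y assume xy: "x \<in> V1" "y \<in> V1" "insert (Suc s) x = insert (Suc s) y"
    have "Suc s \<notin> x" using Vsub[OF xy(1)] by auto
    moreover have "Suc s \<notin> y" using Vsub[OF xy(2)] by auto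
    ultimately show "x = y" using xy(3) by (metis Diff_insert_absorb)
  qed
  have "P d m = card (A1 \<union> insert (Suc s) ` V1)" unfolding P_def eq ..
  also have "\<dots> = card A1 + card (insert (Suc s) ` V1)" using disj finA finV by (intro card_Un_disjoint) auto
  also have "card A1 = (s - 1) choose (d - 1)" unfolding A1_def using card_sub_s_one[OF d s] .
  also have "card (insert (Suc s) ` V1) = card V1" using card_image[OF inj] .
  also have "card V1 = P (d - 1) r" unfolding V1_def P_def ..
  finally show ?thesis unfolding m_def .
qed

definition cmp :: "nat \<Rightarrow> nat set \<Rightarrow> nat set" where "cmp s u = {1..s} - u"

lemma cmp_cmp: "u \<subseteq> {1..s} \<Longrightarrow> cmp s (cmp s u) = u"
  unfolding cmp_def by auto

lemma cmp_binomN: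
  assumes u: "u \<in> binomN e" and us: "u \<subseteq> {..s}"
  shows "cmp s u \<in> binomN (s - e)" "cmp s u \<subseteq> {..s}"
proof -
  have us1: "u \<subseteq> {1..s}" using us binomN_D(3)[OF u] by auto
  have "card (cmp s u) = s - e" unfolding cmp_def using card_Diff_subset[OF _ us1] binomN_D(1,2)[OF u]
    by (metis card_atLeastAtMost diff_Suc_1 finite_subset)
  then show "cmp s u \<in> binomN (s - e)" unfolding cmp_def by (intro binomN_I) auto
  show "cmp s u \<subseteq> {..s}" unfolding cmp_def by auto
qed

lemma cmp_less:
  assumes "u \<subseteq> {1..s}" "u' \<subseteq> {1..s}"
  shows "sq_less (cmp s u) (cmp s u') \<longleftrightarrow> sq_less u' u"
proof -
  let ?D = "(u - u') \<union> (u' - u)"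
  have D: "(cmp s u - cmp s u') \<union> (cmp s u' - cmp s u) = ?D"
    unfolding cmp_def using assms by auto
  have ne: "cmp s u = cmp s u' \<longleftrightarrow> u = u'" using cmp_cmp assms by metis
  show ?thesis
  proof (cases "u = u'")
    case True then show ?thesis using sq_less_irrefl by simp
  next
    case False
    have fD: "finite ?D" using assms finite_subset by blast
    have "?D \<noteq> {}" using False by blast
    then have mD: "Max ?D \<in> ?D" using Max_in[OF fD] by simp
    then have mD1: "Max ?D \<in> {1..s}" using assms by blast
    have "Max ?D \<in> cmp s u' \<longleftrightarrow> Max ?D \<in> u"
      using mD mD1 unfolding cmp_def by blast
    moreover have "(u' - u) \<union> (u - u') = ?D" by blast
    ultimately show ?thesis unfolding sq_less_def D using ne False by auto
  qed
qed

lemma one_cmp: "s \<ge> 1 \<Longrightarrow> 1 \<in> cmp s u \<longleftrightarrow> 1 \<notin> u"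
  unfolding cmp_def by auto

lemma CL:
  assumes e: "e \<ge> 1" and se: "s > e" and x: "x \<le> s choose e"
  shows "P e (s choose e) = P e x + Q (s - e) ((s choose e) - x)"
proof -
  define B where "B = s choose e"
  define k where "k = s - e"
  have k1: "k \<ge> 1" unfolding k_def using se by simp
  have s1: "s \<ge> 1" using se by simp
  define Y where "Y = {u \<in> Cs e B. \<not> rk e u < x}"
  have Ysub: "u \<in> binomN e \<and> u \<subseteq> {..s} \<and> u \<subseteq> {1..s}" if "u \<in> Y" for u
  proof -
    have "u \<in> binomN e" "rk e u < B" using that unfolding Y_def Cs_def by auto
    then show ?thesis using SUBS[of u e s] binomN_D(3) unfolding B_def by fastforce
  qed
  have finY: "finite Y" unfolding Y_def using finite_Cs_all by simp
  have cY: "card Y = B - x"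
  proof -
    have "Y = Cs e B - Cs e x" unfolding Y_def Cs_def by auto
    moreover have "Cs e x \<subseteq> Cs e B" using Cs_mono x unfolding B_def by simp
    ultimately show ?thesis using card_Cs[OF e] finite_Cs[OF e] by (simp add: card_Diff_subset)
  qed
  have splitP: "P e B = P e x + card {u \<in> Y. 1 \<in> u}"
  proof -
    have "{u \<in> Cs e B. 1 \<in> u} = {u \<in> Cs e x. 1 \<in> u} \<union> {u \<in> Y. 1 \<in> u}"
      using Cs_mono[OF x] unfolding Y_def B_def Cs_def by auto
    moreover have "{u \<in> Cs e x. 1 \<in> u} \<inter> {u \<in> Y. 1 \<in> u} = {}" unfolding Y_def Cs_def by auto
    ultimately show ?thesis unfolding P_def using finY finite_Cs_all
      by (simp add: card_Un_disjoint)
  qed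
  have injc: "inj_on (cmp s) Y"
  proof (rule inj_onI)
    fix a b assume "a \<in> Y" "b \<in> Y" "cmp s a = cmp s b"
    moreover have "a \<subseteq> {1..s}" "b \<subseteq> {1..s}" using Ysub \<open>a \<in> Y\<close> \<open>b \<in> Y\<close> by auto
    ultimately show "a = b" using cmp_cmp by metis
  qed
  define X where "X = cmp s ` Y"
  have Xsub: "X \<subseteq> binomN k"
  proof
    fix w assume "w \<in> X"
    then obtain u where u: "u \<in> Y" "w = cmp s u" unfolding X_def by blast
    have "u \<in> binomN e" "u \<subseteq> {..s}" using Ysub[OF u(1)] by auto
    then show "w \<in> binomN k" using cmp_binomN(1) u(2) unfolding k_def by blast
  qed
  have "X = Cs k (card X)"
  proof (rule downclosed_eq[OF k1])
    show "finite X" unfolding X_def using finY by simp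
    show "X \<subseteq> binomN k" by (rule Xsub)
    fix w0 w assume w0: "w0 \<in> X" and w: "w \<in> binomN k" and lt: "sq_less w w0"
    obtain u where u: "u \<in> Y" "w0 = cmp s u" using w0 unfolding X_def by blast
    have uu: "u \<in> binomN e" "u \<subseteq> {..s}" "u \<subseteq> {1..s}" using Ysub[OF u(1)] by auto
    have w0s: "w0 \<subseteq> {..s}" "w0 \<in> binomN k" using cmp_binomN[OF uu(1,2)] u(2) unfolding k_def by auto
    have fw0: "finite w0" using binomN_D(1)[OF w0s(2)] .
    have "w0 \<noteq> {}" using lt unfolding sq_less_def by auto
    then have "w \<subseteq> {..Max w0}" "Max w0 \<le> s"
      using below_subset[OF fw0 binomN_D(1)[OF w] lt] w0s(1) Max_in[OF fw0] by auto
    then have ws: "w \<subseteq> {..s}" by auto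
    have ws1: "w \<subseteq> {1..s}" using ws binomN_D(3)[OF w] by auto
    define u' where "u' = cmp s w"
    have u'b: "u' \<in> binomN e" "u' \<subseteq> {..s}" using cmp_binomN[OF w ws] unfolding u'_def k_def using se by auto
    have u's1: "u' \<subseteq> {1..s}" unfolding u'_def cmp_def by auto
    have wu': "w = cmp s u'" unfolding u'_def using cmp_cmp[OF ws1] by simp
    have "sq_less (cmp s u') (cmp s u)" using lt wu' u(2) by simp
    then have "sq_less u u'" using cmp_less[OF u's1 uu(3)] by simp
    then have "rk e u < rk e u'" using rk_less uu(1) u'b(1) by blast
    moreover have "\<not> rk e u < x" using u(1) Y_def by simp
    moreover have "rk e u' < B" using SUBS[OF u'b(1)] u'b(2) unfolding B_def by simp
    ultimately have "u' \<in> Y" unfolding Y_def Cs_def using u'b(1) by simp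
    then show "w \<in> X" unfolding X_def using wu' by blast
  qed
  moreover have "card X = B - x" unfolding X_def using card_image[OF injc] cY by simp
  ultimately have XC: "X = Cs k (B - x)" by simp
  have "card {u \<in> Y. 1 \<in> u} = card (cmp s ` {u \<in> Y. 1 \<in> u})"
    using injc by (intro card_image[symmetric]) (rule inj_on_subset, auto)
  also have "cmp s ` {u \<in> Y. 1 \<in> u} = {w \<in> X. 1 \<notin> w}"
    unfolding X_def using one_cmp[OF s1] by auto
  also have "\<dots> = {w \<in> Cs k (B - x). 1 \<notin> w}" using XC by simp
  also have "card \<dots> = Q k (B - x)" using card_nonone[OF k1] .
  finally show ?thesis using splitP unfolding B_def k_def by simp
qed

lemma iiP:
  assumes e: "e \<ge> 1" and rd: "r + \<delta> \<le> s choose e"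
  shows "P e (s choose e) + P e r \<le> P e ((s choose e) - \<delta>) + P e (r + \<delta>)"
proof (cases "s > e")
  case False
  then have B1: "s choose e \<le> 1" by (cases "s = e") (auto simp: binomial_eq_0)
  show ?thesis
  proof (cases "\<delta> = 0")
    case True then show ?thesis by simp
  next
    case False
    then have "\<delta> = 1" "r = 0" "s choose e = 1" using rd B1 by auto
    then show ?thesis by (simp add: P_def Cs_def)
  qed
next
  case True
  define B where "B = s choose e"
  define k where "k = s - e"
  have k1: "k \<ge> 1" unfolding k_def using True by simp
  define y where "y = B - r - \<delta>"
  have c1: "P e B = P e (B - \<delta>) + Q k (B - (B - \<delta>))" using CL[OF e True, of "B - \<delta>"] unfolding B_def k_def by simp
  have c2: "P e B = P e r + Q k (B - r)" using CL[OF e True, of r] rd unfolding B_def k_def by simp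
  have c3: "P e B = P e (r + \<delta>) + Q k (B - (r + \<delta>))" using CL[OF e True, of "r + \<delta>"] rd unfolding B_def k_def by simp
  have d1: "B - (B - \<delta>) = \<delta>" using rd unfolding B_def by simp
  have d2: "B - r = y + \<delta>" "B - (r + \<delta>) = y" using rd unfolding y_def B_def by auto
  have o: "P k (y + \<delta>) \<le> P k y + P k \<delta>" using ONES_all[OF k1] .
  have l: "P k y \<le> y" "P k \<delta> \<le> \<delta>" "P k (y + \<delta>) \<le> y + \<delta>" using P_le[OF k1] by auto
  have "Q k \<delta> + Q k y \<le> Q k (y + \<delta>)" unfolding Q_def using o l by simp
  then show ?thesis using c1 c2 c3 d1 d2 unfolding B_def[symmetric] by simp
qed


lemma choose_grow: "d \<ge> 1 \<Longrightarrow> n \<le> (d - 1 + n) choose d"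
proof (induction n)
  case 0 then show ?case by simp
next
  case (Suc n)
  have "(d - 1 + Suc n) choose d = ((d - 1 + n) choose d) + ((d - 1 + n) choose (d - 1))"
    using Suc.prems by (cases d) auto
  moreover have "0 < (d - 1 + n) choose (d - 1)" by (rule zero_less_binomial) simp
  moreover have "n \<le> (d - 1 + n) choose d" using Suc by simp
  moreover have "d - 1 + Suc n = Suc (d - 1 + n)" by simp
  ultimately show ?case by (simp only:)
qed

lemma block_locate:
  assumes d: "d \<ge> 1" and m: "m \<ge> 1"
  shows "\<exists>s r. m = (s choose d) + r \<and> 1 \<le> r \<and> r \<le> s choose (d - 1)"
proof -
  define t where "t = (LEAST t. m \<le> t choose d)"
  have ex: "m \<le> (d - 1 + m) choose d" using choose_grow[OF d] .
  have tm: "m \<le> t choose d" unfolding t_def by (rule LeastI[of _ "d - 1 + m"]) (rule ex)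
  have t0: "t \<ge> 1"
  proof (rule ccontr)
    assume "\<not> t \<ge> 1"
    then have "t = 0" by simp
    then show False using tm d m by (cases d) auto
  qed
  define s where "s = t - 1"
  have ts: "t = Suc s" unfolding s_def using t0 by simp
  have lt: "\<not> m \<le> s choose d"
  proof
    assume "m \<le> s choose d"
    then have "t \<le> s" unfolding t_def by (rule Least_le)
    then show False using ts by simp
  qed
  have pas: "Suc s choose d = (s choose d) + (s choose (d - 1))" using d by (cases d) auto
  define r where "r = m - (s choose d)"
  have tm': "m \<le> (s choose d) + (s choose (d - 1))" using tm pas ts by simp
  have "m = (s choose d) + r" "1 \<le> r" "r \<le> s choose (d - 1)"
    using lt tm' unfolding r_def by linarith+
  then show ?thesis by blast
qed

lemma P_zero: "P d 0 = 0"
  unfolding P_def Cs_def by simp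

definition STAR :: "nat \<Rightarrow> bool" where
  "STAR d \<longleftrightarrow> (\<forall>m b. b < P d m \<longrightarrow> P d m \<le> P d (m - b) + P (d - 1) b)"

lemma STAR_all:
  assumes "d \<ge> 1"
  shows "STAR d"
  using assms
proof (induction d rule: dec_induct)
  case base
  show ?case unfolding STAR_def
  proof (intro allI impI)
    fix m b assume "b < P 1 m"
    then have "b = 0" using P1_le[of m] by simp
    then show "P 1 m \<le> P 1 (m - b) + P (1 - 1) b" by simp
  qed
next
  case (step d)
  have d: "d \<ge> 1" using step.hyps(1) .
  have IH: "STAR d" using step.IH .
  show ?case unfolding STAR_def
  proof (intro allI impI)
    fix m b assume bm: "b < P (Suc d) m"
    have D: "Suc d \<ge> 1" by simp
    have m1: "m \<ge> 1" using bm P_zero by (cases m) auto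
    obtain s r where sr: "m = (s choose Suc d) + r" "1 \<le> r" "r \<le> s choose d"
      using block_locate[OF D m1] by auto
    have s1: "s \<ge> 1"
    proof (rule ccontr)
      assume "\<not> s \<ge> 1"
      then have "s = 0" by simp
      then show False using sr(2,3) d by (cases d) auto
    qed
    have Pm: "P (Suc d) m = ((s - 1) choose d) + P d r" using BLK[OF D s1, of r] sr by simp
    have Pr: "P d r \<le> r" using P_le[OF d] .
    show "P (Suc d) m \<le> P (Suc d) (m - b) + P (Suc d - 1) b"
    proof (cases "b < r")
      case True
      have "P (Suc d) (m - b) = ((s - 1) choose d) + P d (r - b)"
        using BLK[OF D s1, of "r - b"] sr True by (simp add: add_diff_assoc)
      moreover have "P d r \<le> P d (r - b) + P d b" using ONES_all[OF d, of "r - b" b] True by simp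
      ultimately show ?thesis using Pm by simp
    next
      case False
      then have rb: "r \<le> b" by simp
      define B where "B = (s - 1) choose d"
      have bB: "b < B + r" using bm Pm Pr unfolding B_def by simp
      have s2: "s \<ge> 2"
      proof (rule ccontr)
        assume "\<not> s \<ge> 2"
        then have "s = 1" using s1 by simp
        then have "B = 0" unfolding B_def using d by (cases d) auto
        then show False using bB Pr rb by simp
      qed
      define s' where "s' = s - 1"
      have s'1: "s' \<ge> 1" unfolding s'_def using s2 by simp
      have pasD: "s choose Suc d = (s' choose Suc d) + (s' choose d)" unfolding s'_def using s1
        by (cases s) auto
      have Bs': "B = s' choose d" unfolding B_def s'_def ..
      have pasB: "B = ((s' - 1) choose d) + ((s' - 1) choose (d - 1))"
        unfolding Bs' using s'1 d by (cases s', simp, cases d, auto)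
      define r' where "r' = B + r - b"
      have r'1: "1 \<le> r'" "r' \<le> B" unfolding r'_def using bB rb by auto
      have mb: "m - b = (s' choose Suc d) + r'" unfolding r'_def using sr(1) pasD Bs' rb bB by simp
      have Pmb: "P (Suc d) (m - b) = ((s' - 1) choose d) + P d r'"
        using BLK[OF D s'1, of r'] r'1 mb Bs' by simp
      show ?thesis
      proof (cases "r \<le> r'")
        case True
        define \<delta> where "\<delta> = r' - r"
        have "b \<le> B" using True bB unfolding r'_def by arith
        then have bd: "b = B - \<delta>" unfolding \<delta>_def r'_def using bB rb by arith
        have ii: "P d B + P d r \<le> P d (B - \<delta>) + P d (r + \<delta>)"
          using iiP[OF d, of r \<delta> s'] True r'1 unfolding \<delta>_def Bs' by simp
        have PB: "P d B = (s' - 1) choose (d - 1)"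
          using BLK[OF d s'1, of 0] P_zero unfolding Bs' by simp
        have "r + \<delta> = r'" unfolding \<delta>_def using True by simp
        then have "((s' - 1) choose (d - 1)) + P d r \<le> P d b + P d r'" using ii PB bd by simp
        then show ?thesis using Pm Pmb pasB unfolding B_def[symmetric] by simp
      next
        case False
        define \<rho> where "\<rho> = r - r'"
        have \<rho>1: "\<rho> \<ge> 1" unfolding \<rho>_def using False by simp
        have "B < b" using False bB unfolding r'_def by arith
        then have bd: "b = B + \<rho>" unfolding \<rho>_def r'_def using bB rb by arith
        have \<rho>P: "\<rho> < P d r" using bm Pm bd unfolding B_def by simp
        have "P d r \<le> P d (s choose d)" using P_mono sr(3) by blast
        also have "P d (s choose d) = (s - 1) choose (d - 1)"
          using BLK[OF d s1, of 0] P_zero by simp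
        finally have \<rho>le: "\<rho> \<le> s' choose (d - 1)" using \<rho>P unfolding s'_def by simp
        have Pb: "P d b = ((s' - 1) choose (d - 1)) + P (d - 1) \<rho>"
          using BLK[OF d s'1 \<rho>le] bd Bs' by simp
        have "P d r \<le> P d (r - \<rho>) + P (d - 1) \<rho>" using IH \<rho>P unfolding STAR_def by blast
        moreover have "r - \<rho> = r'" unfolding \<rho>_def using False by simp
        ultimately have "P d r \<le> P d r' + P (d - 1) \<rho>" by simp
        then show ?thesis using Pm Pmb pasB Pb unfolding B_def[symmetric] by simp
      qed
    qed
  qed
qed

lemma DCN:
  assumes d: "d \<ge> 1" and a: "\<not> a \<le> Q d (a + b)"
  shows "Q (d - 1) b + Q d a \<le> Q d (a + b)"
proof -
  have l: "P d a \<le> a" "P d (a + b) \<le> a + b" using P_le[OF d] by auto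
  have l2: "P (d - 1) b \<le> b"
  proof (cases "d - 1 = 0")
    case True then show ?thesis using P_0 by simp
  next
    case False then show ?thesis using P_le[of "d - 1"] by simp
  qed
  have "b < P d (a + b)" using a l unfolding Q_def by simp
  then have "P d (a + b) \<le> P d (a + b - b) + P (d - 1) b"
    using STAR_all[OF d] unfolding STAR_def by blast
  then have "P d (a + b) \<le> P d a + P (d - 1) b" by simp
  then show ?thesis unfolding Q_def using l l2 by simp
qed


definition sk :: "nat \<Rightarrow> nat \<Rightarrow> nat" where "sk k x = (if x < k then x else Suc x)"

definition IncS :: "nat set set \<Rightarrow> nat set set" where
  "IncS F = {sk k ` u | u k. u \<in> F \<and> k \<ge> 1}"

definition Dl :: "nat \<Rightarrow> nat set set \<Rightarrow> nat set set" where
  "Dl d G = {u \<in> binomN d. \<forall>k\<ge>1. sk k ` u \<in> G}"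

lemma sk_strict_mono: "strict_mono (sk k)"
  unfolding strict_mono_def sk_def by auto

lemma sk_binomN:
  assumes "u \<in> binomN d"
  shows "sk k ` u \<in> binomN d"
proof -
  have "inj (sk k)" using sk_strict_mono strict_mono_imp_inj_on by blast
  then have "card (sk k ` u) = card u" by (simp add: card_image inj_on_subset)
  moreover have "0 \<notin> sk k ` u" using binomN_D(4)[OF assms] unfolding sk_def by auto
  ultimately show ?thesis using binomN_D[OF assms] by (intro binomN_I) auto
qed

lemma sk1_sh:
  assumes "0 \<notin> u"
  shows "sk 1 ` u = sh u"
proof -
  have "\<forall>x\<in>u. sk 1 x = Suc x" using assms unfolding sk_def by (metis less_one)
  then show ?thesis unfolding sh_def by (simp cong: image_cong)
qed

lemma sk_ins1:
  assumes k: "k \<ge> 1"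
  shows "ins1 (sk k ` v) = sk (Suc k) ` ins1 v"
proof -
  have "sk (Suc k) 1 = 1" using k unfolding sk_def by simp
  moreover have "sk (Suc k) (Suc x) = Suc (sk k x)" for x unfolding sk_def by simp
  ultimately show ?thesis unfolding ins1_def by (simp add: image_image)
qed

lemma sk_sh: "sh (sk k ` w) = sk (Suc k) ` sh w"
proof -
  have "sk (Suc k) (Suc x) = Suc (sk k x)" for x unfolding sk_def by simp
  then show ?thesis unfolding sh_def by (simp add: image_image)
qed

lemma Dl_sh:
  assumes "u \<in> Dl d G"
  shows "sh u \<in> G"
proof -
  have "u \<in> binomN d" "sk 1 ` u \<in> G" using assms unfolding Dl_def by auto
  then show ?thesis using sk1_sh binomN_D(4) by metis
qed

lemma finite_Dl:
  assumes "finite G"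
  shows "finite (Dl d G)"
proof -
  have "sh ` Dl d G \<subseteq> G" using Dl_sh by blast
  then have "finite (sh ` Dl d G)" using assms finite_subset by blast
  moreover have "inj_on sh (Dl d G)" using sh_inj by (meson inj_onI)
  ultimately show ?thesis using finite_image_iff by blast
qed

lemma DC0:
  assumes "finite G"
  shows "card (Dl 0 G) \<le> Q 0 (card G)"
proof -
  have "Dl 0 G \<subseteq> G"
  proof
    fix u assume "u \<in> Dl 0 G"
    then have "u = {}" "sk 1 ` u \<in> G" unfolding Dl_def binomN_0 by auto
    then show "u \<in> G" by simp
  qed
  then have "card (Dl 0 G) \<le> card G" using assms by (rule card_mono[rotated])
  then show ?thesis unfolding Q_def P_0 by simp
qed

lemma DC:
  assumes "finite G" "G \<subseteq> binomN d"
  shows "card (Dl d G) \<le> Q d (card G)"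
  using assms
proof (induction d arbitrary: G)
  case 0
  then show ?case using DC0 by blast
next
  case (Suc e)
  define d where "d = Suc e"
  have d1: "d \<ge> 1" unfolding d_def by simp
  have IHe: "\<And>G1. finite G1 \<Longrightarrow> G1 \<subseteq> binomN e \<Longrightarrow> card (Dl e G1) \<le> Q e (card G1)"
    using Suc.IH by blast
  have main: "\<forall>G. finite G \<and> G \<subseteq> binomN d \<and> (\<forall>u\<in>G. u \<subseteq> {..n}) \<longrightarrow> card (Dl d G) \<le> Q d (card G)" for n
  proof (induction n)
    case 0
    show ?case
    proof (intro allI impI)
      fix G assume G: "finite G \<and> G \<subseteq> binomN d \<and> (\<forall>u\<in>G. u \<subseteq> {..0})"
      have "G = {}"
      proof (rule ccontr)
        assume "G \<noteq> {}"
        then obtain u where u: "u \<in> G" by blast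
        then have "u \<subseteq> {..0}" "u \<in> binomN d" using G by auto
        then have "u = {}" using binomN_D(4) by fastforce
        then show False using \<open>u \<in> binomN d\<close> binomN_D(2) d1 by fastforce
      qed
      then have "Dl d G = {}" unfolding Dl_def by auto
      then show "card (Dl d G) \<le> Q d (card G)" by simp
    qed
  next
    case (Suc n)
    show ?case
    proof (intro allI impI)
      fix G assume G: "finite G \<and> G \<subseteq> binomN d \<and> (\<forall>u\<in>G. u \<subseteq> {..Suc n})"
      have fG: "finite G" and Gb: "G \<subseteq> binomN d" and Gn: "\<forall>u\<in>G. u \<subseteq> {..Suc n}" using G by auto
      define G1 where "G1 = {v \<in> binomN e. ins1 v \<in> G}"
      define G0 where "G0 = {w \<in> binomN d. sh w \<in> G}"
      have e: "e = d - 1" unfolding d_def by simp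
      have im1: "ins1 ` G1 = {u \<in> G. 1 \<in> u}"
      proof
        show "ins1 ` G1 \<subseteq> {u \<in> G. 1 \<in> u}" unfolding G1_def using one_in_ins1 by auto
        show "{u \<in> G. 1 \<in> u} \<subseteq> ins1 ` G1"
        proof
          fix u assume u: "u \<in> {u \<in> G. 1 \<in> u}"
          then have "u \<in> binomN d" "1 \<in> u" using Gb by auto
          note s = ins1_surj[OF this]
          then show "u \<in> ins1 ` G1" unfolding G1_def e using u by (metis (mono_tags, lifting) image_eqI mem_Collect_eq)
        qed
      qed
      have im0: "sh ` G0 = {u \<in> G. 1 \<notin> u}"
      proof
        show "sh ` G0 \<subseteq> {u \<in> G. 1 \<notin> u}" unfolding G0_def using one_notin_sh binomN_D(4) by blast
        show "{u \<in> G. 1 \<notin> u} \<subseteq> sh ` G0"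
        proof
          fix u assume u: "u \<in> {u \<in> G. 1 \<notin> u}"
          then have ub: "u \<in> binomN d" "1 \<notin> u" using Gb by auto
          have "unsh u \<in> binomN d" using unsh_binomN[OF ub] .
          moreover have "sh (unsh u) = u" using sh_unsh binomN_D(4)[OF ub(1)] by blast
          ultimately show "u \<in> sh ` G0" unfolding G0_def using u by (metis (mono_tags, lifting) image_eqI mem_Collect_eq)
        qed
      qed
      have inj1: "inj_on ins1 G1"
      proof (rule inj_onI)
        fix x y assume "x \<in> G1" "y \<in> G1" "ins1 x = ins1 y"
        moreover have "0 \<notin> x" "0 \<notin> y" using calculation(1,2) binomN_D(4) unfolding G1_def by auto
        ultimately show "x = y" using ins1_inj by blast
      qed
      have inj0: "inj_on sh G0" using sh_inj by (meson inj_onI)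
      have fG1: "finite G1"
      proof -
        have "finite (ins1 ` G1)" unfolding im1 using fG by simp
        then show ?thesis using inj1 finite_image_iff by blast
      qed
      have fG0: "finite G0"
      proof -
        have "finite (sh ` G0)" unfolding im0 using fG by simp
        then show ?thesis using inj0 finite_image_iff by blast
      qed
      define a where "a = card G0"
      define b where "b = card G1"
      have cG: "card G = a + b"
      proof -
        have "G = {u \<in> G. 1 \<notin> u} \<union> {u \<in> G. 1 \<in> u}" by blast
        then have "card G = card {u \<in> G. 1 \<notin> u} + card {u \<in> G. 1 \<in> u}"
          using fG by (metis (no_types, lifting) card_Un_disjoint disjoint_iff finite_Un mem_Collect_eq)
        then show ?thesis unfolding a_def b_def using card_image[OF inj0] card_image[OF inj1] im0 im1 by simp
      qed
      have G0n: "\<forall>w\<in>G0. w \<subseteq> {..n}"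
      proof
        fix w assume "w \<in> G0"
        then have "sh w \<subseteq> {..Suc n}" using Gn unfolding G0_def by blast
        then show "w \<subseteq> {..n}" unfolding sh_def by auto
      qed
      have ih0: "card (Dl d G0) \<le> Q d a"
        using Suc.IH fG0 G0n unfolding a_def G0_def by blast
      have ih1: "card (Dl e G1) \<le> Q e b"
        using IHe[OF fG1] unfolding b_def G1_def by blast
      have A: "{u \<in> Dl d G. 1 \<in> u} \<subseteq> ins1 ` Dl e G1"
      proof
        fix u assume u: "u \<in> {u \<in> Dl d G. 1 \<in> u}"
        then have ub: "u \<in> binomN d" "1 \<in> u" "\<forall>k\<ge>1. sk k ` u \<in> G" unfolding Dl_def by auto
        define v where "v = unsh (u - {1})"
        have vb: "v \<in> binomN e" "ins1 v = u" using ins1_surj[OF ub(1,2)] unfolding v_def e by auto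
        have "v \<in> Dl e G1"
        proof -
          have "\<forall>k\<ge>1. sk k ` v \<in> G1"
          proof (intro allI impI)
            fix k :: nat assume k: "k \<ge> 1"
            have "ins1 (sk k ` v) = sk (Suc k) ` u" using sk_ins1[OF k] vb(2) by simp
            then have "ins1 (sk k ` v) \<in> G" using ub(3) by simp
            then show "sk k ` v \<in> G1" unfolding G1_def using sk_binomN[OF vb(1)] by simp
          qed
          then show ?thesis unfolding Dl_def using vb(1) by simp
        qed
        then show "u \<in> ins1 ` Dl e G1" using vb(2) by blast
      qed
      have B: "{u \<in> Dl d G. 1 \<notin> u} \<subseteq> sh ` Dl d G0"
      proof
        fix u assume u: "u \<in> {u \<in> Dl d G. 1 \<notin> u}"
        then have ub: "u \<in> binomN d" "1 \<notin> u" "\<forall>k\<ge>1. sk k ` u \<in> G" unfolding Dl_def by auto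
        define w where "w = unsh u"
        have wb: "w \<in> binomN d" "sh w = u" unfolding w_def using unsh_binomN[OF ub(1,2)] sh_unsh binomN_D(4)[OF ub(1)] by auto
        have "w \<in> Dl d G0"
        proof -
          have "\<forall>k\<ge>1. sk k ` w \<in> G0"
          proof (intro allI impI)
            fix k :: nat assume k: "k \<ge> 1"
            have "sh (sk k ` w) = sk (Suc k) ` u" using sk_sh wb(2) by simp
            then have "sh (sk k ` w) \<in> G" using ub(3) by simp
            then show "sk k ` w \<in> G0" unfolding G0_def using sk_binomN[OF wb(1)] by simp
          qed
          then show ?thesis unfolding Dl_def using wb(1) by simp
        qed
        then show "u \<in> sh ` Dl d G0" using wb(2) by blast
      qed
      have C: "card (Dl d G) \<le> a"
      proof -
        have "sh ` Dl d G \<subseteq> {u \<in> G. 1 \<notin> u}"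
          using Dl_sh one_notin_sh binomN_D(4) unfolding Dl_def by blast
        then have "card (sh ` Dl d G) \<le> card {u \<in> G. 1 \<notin> u}" using fG by (intro card_mono) auto
        moreover have "card (sh ` Dl d G) = card (Dl d G)"
          using sh_inj by (intro card_image) (meson inj_onI)
        ultimately show ?thesis unfolding a_def using card_image[OF inj0] im0 by simp
      qed
      have fDe: "finite (Dl e G1)" using finite_Dl[OF fG1] .
      have fDd: "finite (Dl d G0)" using finite_Dl[OF fG0] .
      have "Dl d G \<subseteq> ins1 ` Dl e G1 \<union> sh ` Dl d G0" using A B by blast
      then have "card (Dl d G) \<le> card (ins1 ` Dl e G1 \<union> sh ` Dl d G0)"
        using fDe fDd by (intro card_mono) auto
      also have "\<dots> \<le> card (ins1 ` Dl e G1) + card (sh ` Dl d G0)" by (rule card_Un_le)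
      also have "\<dots> \<le> card (Dl e G1) + card (Dl d G0)"
        using card_image_le[OF fDe] card_image_le[OF fDd] by (rule add_mono)
      finally have D: "card (Dl d G) \<le> Q e b + Q d a" using ih0 ih1 by simp
      show "card (Dl d G) \<le> Q d (card G)"
      proof (cases "a \<le> Q d (a + b)")
        case True then show ?thesis using C cG by simp
      next
        case False
        have "Q (d - 1) b + Q d a \<le> Q d (a + b)" using DCN[OF d1 False] .
        then show ?thesis using D cG e by simp
      qed
    qed
  qed
  obtain n where n: "\<forall>u\<in>G. u \<subseteq> {..n}"
  proof -
    have "finite (\<Union>G)" using Suc.prems binomN_D(1) by blast
    then obtain n where "\<forall>x\<in>\<Union>G. x \<le> n" using finite_nat_set_iff_bounded_le by blast
    then show ?thesis using that by blast
  qed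
  then show ?case using main Suc.prems unfolding d_def by blast
qed


lemma Inc1_vals:
  assumes "\<pi> \<in> Inc1" "j \<ge> 1"
  shows "\<pi> j = j \<or> \<pi> j = Suc j"
  using assms(2)
proof (induction j rule: dec_induct)
  case base
  have "\<pi> 1 \<ge> 1" "\<pi> 1 \<le> 2" using assms(1) unfolding Inc1_def by auto
  then show ?case by auto
next
  case (step j)
  have "\<pi> j < \<pi> (Suc j)" "\<pi> (Suc j) \<le> Suc j + 1" using assms(1) step.hyps(1) unfolding Inc1_def by auto
  then show ?case using step.IH by auto
qed

lemma Inc1_prop:
  assumes "\<pi> \<in> Inc1" "j \<ge> 1" "\<pi> j = Suc j"
  shows "\<pi> (Suc j) = Suc (Suc j)"
proof -
  have "\<pi> j < \<pi> (Suc j)" using assms(1,2) unfolding Inc1_def by auto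
  then show ?thesis using Inc1_vals[OF assms(1), of "Suc j"] assms(3) by auto
qed

lemma Inc1_sk:
  assumes "\<pi> \<in> Inc1" "finite u" "0 \<notin> u"
  shows "\<exists>k\<ge>1. \<pi> ` u = sk k ` u"
proof (cases "\<exists>j\<ge>1. \<pi> j = Suc j")
  case True
  define k where "k = (LEAST j. j \<ge> 1 \<and> \<pi> j = Suc j)"
  have k: "k \<ge> 1" "\<pi> k = Suc k" unfolding k_def using LeastI_ex[OF True] by auto
  have below: "\<pi> x = x" if "x \<ge> 1" "x < k" for x
  proof -
    have "\<not> (x \<ge> 1 \<and> \<pi> x = Suc x)" using not_less_Least[of x "\<lambda>j. j \<ge> 1 \<and> \<pi> j = Suc j"] that(2) unfolding k_def by blast
    then show ?thesis using Inc1_vals[OF assms(1) that(1)] that(1) by blast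
  qed
  have above: "\<pi> x = Suc x" if "x \<ge> k" for x
    using that
  proof (induction x rule: dec_induct)
    case base then show ?case using k by simp
  next
    case (step x)
    then show ?case using Inc1_prop[OF assms(1)] k(1) by simp
  qed
  have "\<forall>x\<in>u. \<pi> x = sk k x"
  proof
    fix x assume "x \<in> u"
    then have "x \<ge> 1" using assms(3) by (cases x) auto
    then show "\<pi> x = sk k x" unfolding sk_def using below above by auto
  qed
  then have "\<pi> ` u = sk k ` u" by (simp cong: image_cong)
  then show ?thesis using k(1) by blast
next
  case False
  define k where "k = Suc (Max (insert 0 u))"
  have "\<forall>x\<in>u. \<pi> x = sk k x"
  proof
    fix x assume x: "x \<in> u"
    then have "x \<ge> 1" using assms(3) by (cases x) auto
    then have "\<pi> x = x" using Inc1_vals[OF assms(1)] False by blast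
    moreover have "x < k" unfolding k_def using x assms(2) by (simp add: le_imp_less_Suc)
    ultimately show "\<pi> x = sk k x" unfolding sk_def by simp
  qed
  then have "\<pi> ` u = sk k ` u" by (simp cong: image_cong)
  moreover have "k \<ge> 1" unfolding k_def by simp
  ultimately show ?thesis by blast
qed

lemma sk_Inc1: "k \<ge> 1 \<Longrightarrow> sk k \<in> Inc1"
  unfolding Inc1_def sk_def by auto

lemma Inc_eq:
  assumes "X \<subseteq> binomN d"
  shows "Inc X = IncS X"
proof
  show "Inc X \<subseteq> IncS X"
  proof
    fix w assume "w \<in> Inc X"
    then obtain u \<pi> where u: "w = \<pi> ` u" "u \<in> X" "\<pi> \<in> Inc1" unfolding Inc_def by blast
    have ub: "u \<in> binomN d" using u(2) assms by blast
    obtain k where "k \<ge> 1" "\<pi> ` u = sk k ` u" using Inc1_sk[OF u(3) binomN_D(1)[OF ub] binomN_D(4)[OF ub]] by blast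
    then show "w \<in> IncS X" unfolding IncS_def using u by blast
  qed
  show "IncS X \<subseteq> Inc X"
    unfolding IncS_def Inc_def using sk_Inc1 by blast
qed

lemma finite_IncS:
  assumes "finite F" "F \<subseteq> binomN d"
  shows "finite (IncS F)"
proof -
  have "IncS F \<subseteq> (\<Union>u\<in>F. (\<lambda>k. sk k ` u) ` {1..Suc (Max (insert 0 u))})"
  proof
    fix w assume "w \<in> IncS F"
    then obtain u k where uk: "w = sk k ` u" "u \<in> F" "k \<ge> 1" unfolding IncS_def by blast
    have fu: "finite u" using uk(2) assms(2) binomN_D(1) by blast
    define M where "M = Suc (Max (insert 0 u))"
    show "w \<in> (\<Union>u\<in>F. (\<lambda>k. sk k ` u) ` {1..Suc (Max (insert 0 u))})"
    proof (cases "k \<le> M")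
      case True
      have "k \<in> {1..Suc (Max (insert 0 u))}" using True uk(3) unfolding M_def by simp
      then have "w \<in> (\<lambda>k. sk k ` u) ` {1..Suc (Max (insert 0 u))}" using uk(1) by blast
      then show ?thesis using uk(2) by blast
    next
      case False
      have "\<forall>x\<in>u. sk k x = sk M x"
      proof
        fix x assume "x \<in> u"
        then have "x < M" unfolding M_def using fu by (simp add: le_imp_less_Suc)
        then show "sk k x = sk M x" unfolding sk_def using False by simp
      qed
      then have "w = sk M ` u" using uk(1) by (simp cong: image_cong)
      moreover have "M \<in> {1..Suc (Max (insert 0 u))}" unfolding M_def by simp
      ultimately have "w \<in> (\<lambda>k. sk k ` u) ` {1..Suc (Max (insert 0 u))}" unfolding M_def by blast
      then show ?thesis using uk(2) by blast
    qed
  qed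
  moreover have "finite (\<Union>u\<in>F. (\<lambda>k. sk k ` u) ` {1..Suc (Max (insert 0 u))})"
    using assms(1) by simp
  ultimately show ?thesis by (rule finite_subset)
qed

lemma IncS_sub: "F \<subseteq> binomN d \<Longrightarrow> IncS F \<subseteq> binomN d"
  unfolding IncS_def using sk_binomN by blast

lemma sk_le_sh:
  assumes "finite u" "0 \<notin> u" "k \<ge> 1"
  shows "sk k ` u = Suc ` u \<or> sq_less (sk k ` u) (Suc ` u)"
proof (cases "\<exists>x\<in>u. x < k")
  case False
  then have "\<forall>x\<in>u. sk k x = Suc x" unfolding sk_def by auto
  then show ?thesis by (simp cong: image_cong)
next
  case True
  define L where "L = {x \<in> u. x < k}"
  have fL: "finite L" "L \<noteq> {}" unfolding L_def using True assms(1) by auto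
  define x0 where "x0 = Max L"
  have x0: "x0 \<in> u" "x0 < k" using Max_in[OF fL] unfolding x0_def L_def by auto
  have x0max: "\<And>x. x \<in> u \<Longrightarrow> x < k \<Longrightarrow> x \<le> x0" unfolding x0_def L_def using Max_ge[OF fL(1)] L_def by blast
  have f2: "finite (sk k ` u)" "finite (Suc ` u)" using assms(1) by auto
  have "Suc x0 \<in> Suc ` u" using x0 by simp
  moreover have "Suc x0 \<notin> sk k ` u"
  proof
    assume "Suc x0 \<in> sk k ` u"
    then obtain y where y: "y \<in> u" "Suc x0 = sk k y" by blast
    show False
    proof (cases "y < k")
      case True
      then have "y = Suc x0" using y unfolding sk_def by simp
      then show False using x0max[OF y(1) True] by simp
    next
      case False
      then have "y = x0" using y unfolding sk_def by simp
      then show False using x0(2) False by simp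
    qed
  qed
  moreover have "\<forall>z>Suc x0. z \<in> sk k ` u \<longleftrightarrow> z \<in> Suc ` u"
  proof (intro allI impI)
    fix z assume z: "z > Suc x0"
    show "z \<in> sk k ` u \<longleftrightarrow> z \<in> Suc ` u"
    proof
      assume "z \<in> sk k ` u"
      then obtain y where y: "y \<in> u" "z = sk k y" by blast
      show "z \<in> Suc ` u"
      proof (cases "y < k")
        case True
        then have "z = y" using y unfolding sk_def by simp
        then show ?thesis using x0max[OF y(1) True] z by simp
      next
        case False
        then show ?thesis using y unfolding sk_def by simp
      qed
    next
      assume "z \<in> Suc ` u"
      then obtain y where y: "y \<in> u" "z = Suc y" by blast
      have "\<not> y < k"
      proof
        assume "y < k"
        then show False using x0max[OF y(1)] y(2) z by simp
      qed
      then have "sk k y = z" using y(2) unfolding sk_def by simp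
      then show "z \<in> sk k ` u" using y(1) by blast
    qed
  qed
  ultimately have "sq_less (sk k ` u) (Suc ` u)" using sq_less_iff[OF f2] by blast
  then show ?thesis by simp
qed

lemma FA:
  assumes d: "d \<ge> 1"
  shows "IncS (Cs d (Q d M)) \<subseteq> Cs d M"
proof
  fix w assume "w \<in> IncS (Cs d (Q d M))"
  then obtain u k where uk: "w = sk k ` u" "u \<in> Cs d (Q d M)" "k \<ge> 1" unfolding IncS_def by blast
  have ub: "u \<in> binomN d" using uk(2) Cs_sub by blast
  have shC: "sh u \<in> Cs d M" using M2[OF d, of M] uk(2) by blast
  have wb: "w \<in> binomN d" using sk_binomN[OF ub] uk(1) by simp
  have "w = sh u \<or> sq_less w (sh u)"
    using sk_le_sh[OF binomN_D(1)[OF ub] binomN_D(4)[OF ub] uk(3)] uk(1) unfolding sh_def by simp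
  then show "w \<in> Cs d M" using shC Cs_down[OF shC wb] by blast
qed

theorem theorem3p5:
  fixes d :: nat and F :: "nat set set"
  assumes "d \<ge> 1" and "finite F" and "F \<subseteq> binomN d"
  shows "Inc (compression d F) \<subseteq> compression d (Inc F)"
proof -
  define G where "G = IncS F"
  define M where "M = card G"
  have GI: "Inc F = G" unfolding G_def using Inc_eq[OF assms(3)] .
  have fG: "finite G" unfolding G_def using finite_IncS[OF assms(2,3)] .
  have Gb: "G \<subseteq> binomN d" unfolding G_def using IncS_sub[OF assms(3)] .
  have "F \<subseteq> Dl d G" unfolding Dl_def G_def IncS_def using assms(3) by blast
  then have "card F \<le> card (Dl d G)" using finite_Dl[OF fG] by (rule card_mono[rotated])
  also have "\<dots> \<le> Q d M" unfolding M_def using DC[OF fG Gb] .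
  finally have cF: "card F \<le> Q d M" .
  have "Inc (compression d F) = IncS (Cs d (card F))"
    unfolding compression_eq using Inc_eq[OF Cs_sub] .
  also have "\<dots> \<subseteq> IncS (Cs d (Q d M))"
    using Cs_mono[OF cF] unfolding IncS_def by blast
  also have "\<dots> \<subseteq> Cs d M" using FA[OF assms(1)] .
  also have "\<dots> = compression d (Inc F)" unfolding compression_eq GI M_def ..
  finally show ?thesis .
qed


end
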